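(* Let $G \ne K_4$ be a connected, claw-free, cubic graph of order $n$ with $u(G)$ units. Then $m(G,2) = u(G)+1$ if $G$ is a diamond-necklace $N_k$ for some $k\ge 2$, and $m(G,2) = u(G)$ otherwise.
   Context: A graph is claw-free if it has no induced subgraph isomorphic to $K_{1,3}$; it is cubic if every vertex has degree $3$. A diamond is an induced subgraph isomorphic to $K_4$ minus one edge. For a connected, claw-free, cubic graph $G\neq K_4$, the vertex set $V(G)$ can be uniquely partitioned into sets each of which induces a triangle or a diamond in $G$; the parts are called units, and $u(G)$ is the number of units. Diamond-necklace: for $k\ge 2$, take $k$ disjoint diamonds $D_1,\dots,D_k$ with $V(D_i)=\{a_i,b_i,c_i,d_i\}$ where $a_ib_i$ is the missing edge, and add the edges $a_ib_{i+1}$ for $i\in\{1,\dots,k-1\}$ and the edge $a_kb_1$; the result is $N_k$. $r$-percolation: starting from a set $S$ of infected vertices, repeatedly infect any uninfected vertex having at least $r$ infected neighbors. $S$ is an $r$-percolating set if eventually all vertices are infected; $m(G,r)$ is the minimum cardinality of an $r$-percolating set of $G$. *)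

theory Defs
  imports Main
begin

definition simple_graph :: "'a set \<Rightarrow> ('a \<Rightarrow> 'a \<Rightarrow> bool) \<Rightarrow> bool" where
  "simple_graph V E \<longleftrightarrow> finite V \<and> (\<forall>x y. E x y \<longrightarrow> x \<in> V \<and> y \<in> V)
     \<and> (\<forall>x y. E x y \<longrightarrow> E y x) \<and> (\<forall>x. \<not> E x x)"

definition graph_connected :: "'a set \<Rightarrow> ('a \<Rightarrow> 'a \<Rightarrow> bool) \<Rightarrow> bool" where
  "graph_connected V E \<longleftrightarrow> (\<forall>x\<in>V. \<forall>y\<in>V. E\<^sup>*\<^sup>* x y)"

definition cubic :: "'a set \<Rightarrow> ('a \<Rightarrow> 'a \<Rightarrow> bool) \<Rightarrow> bool" where
  "cubic V E \<longleftrightarrow> (\<forall>v\<in>V. card {w. E v w} = 3)"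

definition claw_free :: "'a set \<Rightarrow> ('a \<Rightarrow> 'a \<Rightarrow> bool) \<Rightarrow> bool" where
  "claw_free V E \<longleftrightarrow> \<not> (\<exists>x a b c. x \<in> V \<and> a \<in> V \<and> b \<in> V \<and> c \<in> V \<and>
      a \<noteq> b \<and> a \<noteq> c \<and> b \<noteq> c \<and> E x a \<and> E x b \<and> E x c \<and>
      \<not> E a b \<and> \<not> E a c \<and> \<not> E b c)"

definition is_K4 :: "'a set \<Rightarrow> ('a \<Rightarrow> 'a \<Rightarrow> bool) \<Rightarrow> bool" where
  "is_K4 V E \<longleftrightarrow> card V = 4 \<and> (\<forall>x\<in>V. \<forall>y\<in>V. x \<noteq> y \<longrightarrow> E x y)"

definition induces_triangle :: "('a \<Rightarrow> 'a \<Rightarrow> bool) \<Rightarrow> 'a set \<Rightarrow> bool" where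
  "induces_triangle E S \<longleftrightarrow> card S = 3 \<and> (\<forall>x\<in>S. \<forall>y\<in>S. x \<noteq> y \<longrightarrow> E x y)"

definition induces_diamond :: "('a \<Rightarrow> 'a \<Rightarrow> bool) \<Rightarrow> 'a set \<Rightarrow> bool" where
  "induces_diamond E S \<longleftrightarrow> (\<exists>a b c d. S = {a, b, c, d} \<and> card S = 4 \<and>
      \<not> E a b \<and> E a c \<and> E a d \<and> E b c \<and> E b d \<and> E c d)"

definition unit_partition :: "'a set \<Rightarrow> ('a \<Rightarrow> 'a \<Rightarrow> bool) \<Rightarrow> 'a set set \<Rightarrow> bool" where
  "unit_partition V E P \<longleftrightarrow> \<Union>P = V \<and>
      (\<forall>A\<in>P. \<forall>B\<in>P. A \<noteq> B \<longrightarrow> A \<inter> B = {}) \<and>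
      (\<forall>A\<in>P. induces_triangle E A \<or> induces_diamond E A)"

text \<open>u(G): number of units of the (unique) unit partition.\<close>
definition num_units :: "'a set \<Rightarrow> ('a \<Rightarrow> 'a \<Rightarrow> bool) \<Rightarrow> nat" where
  "num_units V E = card (THE P. unit_partition V E P)"

text \<open>Diamond-necklace N_k on vertices (i,j), i<k, j=0,1,2,3 standing for a_i,b_i,c_i,d_i
  (0-indexed diamonds); a_i b_{(i+1) mod k} are the connecting edges.\<close>
definition necklace_V :: "nat \<Rightarrow> (nat \<times> nat) set" where
  "necklace_V k = {(i, j). i < k \<and> j < 4}"

definition necklace_E :: "nat \<Rightarrow> nat \<times> nat \<Rightarrow> nat \<times> nat \<Rightarrow> bool" where
  "necklace_E k p q \<longleftrightarrow> p \<in> necklace_V k \<and> q \<in> necklace_V k \<and>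
     ((fst p = fst q \<and> snd p \<noteq> snd q \<and> {snd p, snd q} \<noteq> {0, 1}) \<or>
      (snd p = 0 \<and> snd q = 1 \<and> fst q = (fst p + 1) mod k) \<or>
      (snd q = 0 \<and> snd p = 1 \<and> fst p = (fst q + 1) mod k))"

definition graph_iso :: "'a set \<Rightarrow> ('a \<Rightarrow> 'a \<Rightarrow> bool) \<Rightarrow> 'b set \<Rightarrow> ('b \<Rightarrow> 'b \<Rightarrow> bool) \<Rightarrow> bool" where
  "graph_iso V E W F \<longleftrightarrow> (\<exists>f. bij_betw f V W \<and> (\<forall>x\<in>V. \<forall>y\<in>V. E x y \<longleftrightarrow> F (f x) (f y)))"

definition is_diamond_necklace :: "'a set \<Rightarrow> ('a \<Rightarrow> 'a \<Rightarrow> bool) \<Rightarrow> bool" where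
  "is_diamond_necklace V E \<longleftrightarrow> (\<exists>k\<ge>2. graph_iso V E (necklace_V k) (necklace_E k))"

inductive infected :: "'a set \<Rightarrow> ('a \<Rightarrow> 'a \<Rightarrow> bool) \<Rightarrow> nat \<Rightarrow> 'a set \<Rightarrow> 'a \<Rightarrow> bool"
  for V E r S where
  init: "x \<in> S \<Longrightarrow> infected V E r S x"
| step: "x \<in> V \<Longrightarrow> finite T \<Longrightarrow> card T \<ge> r \<Longrightarrow> (\<forall>y\<in>T. E x y \<and> infected V E r S y)
         \<Longrightarrow> infected V E r S x"

definition percolating :: "'a set \<Rightarrow> ('a \<Rightarrow> 'a \<Rightarrow> bool) \<Rightarrow> nat \<Rightarrow> 'a set \<Rightarrow> bool" where
  "percolating V E r S \<longleftrightarrow> S \<subseteq> V \<and> (\<forall>x\<in>V. infected V E r S x)"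

definition m_perc :: "'a set \<Rightarrow> ('a \<Rightarrow> 'a \<Rightarrow> bool) \<Rightarrow> nat \<Rightarrow> nat" where
  "m_perc V E r = (LEAST c. \<exists>S. percolating V E r S \<and> card S = c)"

end

theory Submission
  imports Defs
begin



lemma card_le3: "card {x,y,z::'a} \<le> 3"
  by (auto simp: card_insert_if)

lemma card4_iff: "card {a,b,c,d} = 4 \<longleftrightarrow> a \<noteq> b \<and> a \<noteq> c \<and> a \<noteq> d \<and> b \<noteq> c \<and> b \<noteq> d \<and> c \<noteq> d"
proof
  assume h: "card {a,b,c,d} = 4"
  show "a \<noteq> b \<and> a \<noteq> c \<and> a \<noteq> d \<and> b \<noteq> c \<and> b \<noteq> d \<and> c \<noteq> d"
  proof (rule ccontr)
    assume "\<not> ?thesis"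
    then have "\<exists>x y z. {a,b,c,d} = {x,y,z}" by auto
    then show False using h card_le3 by (metis numeral_le_iff semiring_norm(69,72))
  qed
qed (auto simp: card_insert_if)

definition tri :: "('a \<Rightarrow> 'a \<Rightarrow> bool) \<Rightarrow> 'a \<Rightarrow> 'a \<Rightarrow> 'a \<Rightarrow> bool" where
  "tri E x y z \<longleftrightarrow> x \<noteq> y \<and> x \<noteq> z \<and> y \<noteq> z \<and> E x y \<and> E x z \<and> E y z"

definition dia :: "('a \<Rightarrow> 'a \<Rightarrow> bool) \<Rightarrow> 'a \<Rightarrow> 'a \<Rightarrow> 'a \<Rightarrow> 'a \<Rightarrow> bool" where
  "dia E a b c d \<longleftrightarrow> a \<noteq> b \<and> a \<noteq> c \<and> a \<noteq> d \<and> b \<noteq> c \<and> b \<noteq> d \<and> c \<noteq> d \<and>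
     \<not> E a b \<and> E a c \<and> E a d \<and> E b c \<and> E b d \<and> E c d"

lemma induces_diamond_iff: "induces_diamond E S \<longleftrightarrow> (\<exists>a b c d. S = {a,b,c,d} \<and> dia E a b c d)"
proof
  assume "induces_diamond E S"
  then obtain a b c d where "S = {a,b,c,d}" "card {a,b,c,d} = 4" "\<not> E a b" "E a c" "E a d" "E b c" "E b d" "E c d"
    unfolding induces_diamond_def by blast
  then show "\<exists>a b c d. S = {a,b,c,d} \<and> dia E a b c d" unfolding dia_def card4_iff by metis
next
  assume "\<exists>a b c d. S = {a,b,c,d} \<and> dia E a b c d"
  then obtain a b c d where "S = {a,b,c,d}" "dia E a b c d" by blast
  then show "induces_diamond E S" unfolding induces_diamond_def dia_def
    by (intro exI[of _ a] exI[of _ b] exI[of _ c] exI[of _ d]) (simp add: card4_iff)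
qed

locale cg =
  fixes V :: "'a set" and E :: "'a \<Rightarrow> 'a \<Rightarrow> bool"
  assumes sg: "simple_graph V E" and conn: "graph_connected V E" and cf: "claw_free V E"
    and cub: "cubic V E" and nK4: "\<not> is_K4 V E"
begin

lemma finV: "finite V" using sg by (simp add: simple_graph_def)
lemma EV1: "E x y \<Longrightarrow> x \<in> V" using sg by (simp add: simple_graph_def)
lemma EV2: "E x y \<Longrightarrow> y \<in> V" using sg by (simp add: simple_graph_def)
lemma Esym: "E x y \<Longrightarrow> E y x" using sg by (simp add: simple_graph_def)
lemma Eirr[simp]: "\<not> E x x" using sg by (simp add: simple_graph_def)
lemma Ene: "E x y \<Longrightarrow> x \<noteq> y" using Eirr by blast
lemma Esym_iff: "E x y \<longleftrightarrow> E y x" using Esym by blast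

lemma finN: "finite {w. E v w}"
  by (rule finite_subset[OF _ finV]) (auto intro: EV2)

lemma cardN: "v \<in> V \<Longrightarrow> card {w. E v w} = 3"
  using cub by (simp add: cubic_def)

lemma N3: assumes "E v x" "E v y" "E v z" "x \<noteq> y" "x \<noteq> z" "y \<noteq> z"
  shows "{w. E v w} = {x,y,z}"
proof -
  have "v \<in> V" using assms EV1 by blast
  then have c: "card {w. E v w} = 3" by (rule cardN)
  have s: "{x,y,z} \<subseteq> {w. E v w}" using assms by auto
  have "card {x,y,z} = 3" using assms by auto
  then show ?thesis using card_subset_eq[OF finN s] c by simp
qed

lemma N3': "E v x \<Longrightarrow> E v y \<Longrightarrow> E v z \<Longrightarrow> x \<noteq> y \<Longrightarrow> x \<noteq> z \<Longrightarrow> y \<noteq> z \<Longrightarrow> E v w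
  \<Longrightarrow> w = x \<or> w = y \<or> w = z"
  using N3 by blast

lemma third: assumes "E v x" "E v y" "x \<noteq> y" shows "\<exists>z. E v z \<and> z \<noteq> x \<and> z \<noteq> y"
proof (rule ccontr)
  assume "\<not> ?thesis"
  then have "{w. E v w} \<subseteq> {x,y}" by auto
  then have "card {w. E v w} \<le> card {x,y}" by (intro card_mono) auto
  also have "\<dots> \<le> 2" by (auto simp: card_insert_if)
  finally have "card {w. E v w} \<le> 2" .
  moreover have "v \<in> V" using assms EV1 by blast
  ultimately show False using cardN by simp
qed

lemma claw: assumes "E v x" "E v y" "E v z" "x \<noteq> y" "x \<noteq> z" "y \<noteq> z"
  shows "E x y \<or> E x z \<or> E y z"
  using cf assms EV1 EV2 unfolding claw_free_def by blast

lemma induces_triangle_iff: "induces_triangle E S \<longleftrightarrow> (\<exists>x y z. S = {x,y,z} \<and> tri E x y z)"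
proof
  assume "induces_triangle E S"
  then obtain x y z where "S = {x,y,z}" "x \<noteq> y" "y \<noteq> z" "x \<noteq> z" "\<forall>a\<in>S. \<forall>b\<in>S. a \<noteq> b \<longrightarrow> E a b"
    unfolding induces_triangle_def card_3_iff by blast
  then show "\<exists>x y z. S = {x,y,z} \<and> tri E x y z" unfolding tri_def by auto
next
  assume "\<exists>x y z. S = {x,y,z} \<and> tri E x y z"
  then obtain x y z where "S = {x,y,z}" "tri E x y z" by blast
  then show "induces_triangle E S" unfolding induces_triangle_def tri_def card_3_iff
    using Esym by auto
qed

end


context cg begin

lemma K4_contra:
  assumes "x \<noteq> y" "x \<noteq> z" "x \<noteq> w" "y \<noteq> z" "y \<noteq> w" "z \<noteq> w"
    "E x y" "E x z" "E x w" "E y z" "E y w" "E z w"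
  shows False
proof -
  let ?K = "{x,y,z,w}"
  have nb: "\<And>u u'. u \<in> ?K \<Longrightarrow> E u u' \<Longrightarrow> u' \<in> ?K"
  proof -
    fix u u' assume "u \<in> ?K" "E u u'"
    then show "u' \<in> ?K"
      using N3'[of x y z w u'] N3'[of y x z w u'] N3'[of z x y w u'] N3'[of w x y z u'] assms Esym
      by auto
  qed
  have r: "E\<^sup>*\<^sup>* x u \<Longrightarrow> u \<in> ?K" for u
  proof (induction rule: rtranclp_induct)
    case (step u u') then show ?case using nb by blast
  qed simp
  have "x \<in> V" using assms EV1 by blast
  then have "V \<subseteq> ?K" using conn r unfolding graph_connected_def by blast
  moreover have "?K \<subseteq> V" using assms EV1 EV2 by blast
  ultimately have VK: "V = ?K" by blast
  have "card V = 4" unfolding VK using assms by (simp add: card4_iff)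
  moreover have "\<forall>u\<in>V. \<forall>v\<in>V. u \<noteq> v \<longrightarrow> E u v" unfolding VK using assms Esym by auto
  ultimately show False using nK4 unfolding is_K4_def by blast
qed

lemma dia_swap1: "dia E a b c d \<Longrightarrow> dia E b a c d" unfolding dia_def using Esym by blast
lemma dia_swap2: "dia E a b c d \<Longrightarrow> dia E a b d c" unfolding dia_def using Esym by blast
lemma tri_perm1: "tri E x y z \<Longrightarrow> tri E y x z" unfolding tri_def using Esym by blast
lemma tri_perm2: "tri E x y z \<Longrightarrow> tri E z y x" unfolding tri_def using Esym by blast
lemma tri_perm3: "tri E x y z \<Longrightarrow> tri E x z y" unfolding tri_def using Esym by blast

lemma mid_nb: "dia E a b c d \<Longrightarrow> E c w \<Longrightarrow> w = a \<or> w = b \<or> w = d"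
  unfolding dia_def using N3'[of c a b d w] Esym by blast

lemma end_tri:
  assumes D: "dia E a b c d" and "tri E a y z"
  shows "y \<in> {c,d} \<and> z \<in> {c,d}"
proof -
  have ay: "E a y" "E a z" "E y z" "y \<noteq> z" "a \<noteq> y" "a \<noteq> z" using assms(2) unfolding tri_def by auto
  have ac: "E a c" "E a d" "c \<noteq> d" "a \<noteq> b" "\<not> E a b" using D unfolding dia_def by auto
  show ?thesis
  proof (cases "y \<in> {c,d}")
    case True
    then show ?thesis
      using mid_nb[OF D, of z] mid_nb[OF dia_swap2[OF D], of z] ay Esym ac by auto
  next
    case False
    then have "{w. E a w} = {c,d,y}" using N3[of a c d y] ay ac by auto
    then have "z \<in> {c,d}" using ay by auto
    then have "y \<in> {a,b,d} \<or> y \<in> {a,b,c}"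
      using mid_nb[OF D, of y] mid_nb[OF dia_swap2[OF D], of y] ay Esym[OF ay(3)] by auto
    then show ?thesis using False ay ac Esym by auto
  qed
qed

lemma tri_in_dia:
  assumes D: "dia E a b c d" and T: "tri E x y z" and x: "x \<in> {a,b,c,d}"
  shows "{x,y,z} \<subseteq> {a,b,c,d}"
proof -
  have t: "E x y" "E x z" "E y z" "x \<noteq> y" "x \<noteq> z" "y \<noteq> z" using T unfolding tri_def by auto
  consider "x = a" | "x = b" | "x = c" | "x = d" using x by blast
  then show ?thesis
  proof cases
    case 1 then show ?thesis using end_tri[OF D] T by auto
  next
    case 2 then show ?thesis using end_tri[OF dia_swap1[OF D]] T by auto
  next
    case 3 then show ?thesis using mid_nb[OF D, of y] mid_nb[OF D, of z] t by auto
  next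
    case 4 then show ?thesis using mid_nb[OF dia_swap2[OF D], of y] mid_nb[OF dia_swap2[OF D], of z] t by auto
  qed
qed

lemma tri_meets_dia:
  assumes D: "dia E a b c d" and T: "tri E x y z" and m: "{x,y,z} \<inter> {a,b,c,d} \<noteq> {}"
  shows "{x,y,z} \<subseteq> {a,b,c,d}"
proof -
  consider "x \<in> {a,b,c,d}" | "y \<in> {a,b,c,d}" | "z \<in> {a,b,c,d}" using m by blast
  then show ?thesis
  proof cases
    case 1 then show ?thesis using tri_in_dia[OF D T] by blast
  next
    case 2 then show ?thesis using tri_in_dia[OF D tri_perm1[OF T]] by blast
  next
    case 3 then show ?thesis using tri_in_dia[OF D tri_perm2[OF T]] by blast
  qed
qed

lemma dia_tris: "dia E a b c d \<Longrightarrow> tri E a c d \<and> tri E b c d"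
  unfolding dia_def tri_def by blast

lemma dia_eq:
  assumes D: "dia E a b c d" and D': "dia E a' b' c' d'"
    and m: "{a,b,c,d} \<inter> {a',b',c',d'} \<noteq> {}"
  shows "{a',b',c',d'} = {a,b,c,d}"
proof -
  have t1: "tri E a' c' d'" and t2: "tri E b' c' d'" using dia_tris[OF D'] by auto
  have "{a',c',d'} \<inter> {a,b,c,d} \<noteq> {} \<or> {b',c',d'} \<inter> {a,b,c,d} \<noteq> {}" using m by blast
  then have "{a',c',d'} \<subseteq> {a,b,c,d} \<or> {b',c',d'} \<subseteq> {a,b,c,d}"
    using tri_meets_dia[OF D t1] tri_meets_dia[OF D t2] by blast
  then have "{a',c',d'} \<subseteq> {a,b,c,d} \<and> {b',c',d'} \<subseteq> {a,b,c,d}"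
    using tri_meets_dia[OF D t1] tri_meets_dia[OF D t2] by blast
  then have s: "{a',b',c',d'} \<subseteq> {a,b,c,d}" by blast
  have "card {a',b',c',d'} = 4" "card {a,b,c,d} = 4" using D D' unfolding dia_def by (simp_all add: card4_iff)
  then show ?thesis using card_subset_eq[OF _ s] by simp
qed

lemma two_tris:
  assumes T1: "tri E v x y" and T2: "tri E v x' y'" and ne: "{v,x,y} \<noteq> {v,x',y'}"
  shows "\<exists>a b c d. dia E a b c d \<and> v \<in> {a,b,c,d}"
proof -
  have t1: "E v x" "E v y" "E x y" "v \<noteq> x" "v \<noteq> y" "x \<noteq> y" using T1 unfolding tri_def by auto
  have t2: "E v x'" "E v y'" "E x' y'" "v \<noteq> x'" "v \<noteq> y'" "x' \<noteq> y'" using T2 unfolding tri_def by auto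
  have gen: "\<exists>a b c d. dia E a b c d \<and> v \<in> {a,b,c,d}"
    if h: "E v p" "E v q" "E p q" "E v t" "E t s" "s \<in> {p,q}" "t \<notin> {p,q}" "p \<noteq> q" "v \<noteq> p" "v \<noteq> q" "v \<noteq> t"
    for p q t s
  proof -
    obtain r where r: "{s, r} = {p,q}" "r \<noteq> s" using h by blast
    have "E v s" "E v r" "E s r" using h r Esym by auto
    have "\<not> E r t"
    proof
      assume "E r t"
      show False using K4_contra[of v s r t] h r \<open>E r t\<close> Esym by auto
    qed
    then have "dia E r t v s" unfolding dia_def using h r Esym by auto
    then show ?thesis by blast
  qed
  show ?thesis
  proof (cases "x' \<in> {x,y}")
    case True
    then have "y' \<notin> {x,y}" using ne t2 by auto
    then show ?thesis using gen[of x y y' x'] t1 t2 True Esym by auto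
  next
    case False
    then have "{w. E v w} = {x,y,x'}" using N3[of v x y x'] t1 t2 by auto
    then have "y' \<in> {x,y}" using t2 by auto
    then show ?thesis using gen[of x y x' y'] t1 t2 False by auto
  qed
qed

end


context cg begin

definition P0 :: "'a set set" where
  "P0 = {X. (\<exists>a b c d. X = {a,b,c,d} \<and> dia E a b c d) \<or>
     (\<exists>x y z. X = {x,y,z} \<and> tri E x y z \<and> (\<forall>a b c d. dia E a b c d \<longrightarrow> {x,y,z} \<inter> {a,b,c,d} = {}))}"

lemma in_tri: assumes "v \<in> V" shows "\<exists>x y. tri E v x y"
proof -
  have "card {w. E v w} = 3" using cardN assms by blast
  then obtain x y z where xyz: "{w. E v w} = {x,y,z}" "x \<noteq> y" "y \<noteq> z" "x \<noteq> z"
    unfolding card_3_iff by blast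
  then have e: "E v x" "E v y" "E v z" by auto
  then have "E x y \<or> E x z \<or> E y z" using claw xyz by blast
  then show ?thesis
  proof (elim disjE)
    assume "E x y" then have "tri E v x y" using e xyz Ene unfolding tri_def by blast
    then show ?thesis by blast
  next
    assume "E x z" then have "tri E v x z" using e xyz Ene unfolding tri_def by blast
    then show ?thesis by blast
  next
    assume "E y z" then have "tri E v y z" using e xyz Ene unfolding tri_def by blast
    then show ?thesis by blast
  qed
qed

lemma tri_rot: "tri E x y z \<Longrightarrow> v \<in> {x,y,z} \<Longrightarrow> \<exists>p q. {x,y,z} = {v,p,q} \<and> tri E v p q"
proof -
  assume t: "tri E x y z" and v: "v \<in> {x,y,z}"
  consider "v = x" | "v = y" | "v = z" using v by blast
  then show ?thesis
  proof cases
    case 1 then show ?thesis using t by blast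
  next
    case 2
    have "{x,y,z} = {y,x,z}" by blast
    then show ?thesis using 2 tri_perm1[OF t] by blast
  next
    case 3
    have "{x,y,z} = {z,y,x}" by blast
    then show ?thesis using 3 tri_perm2[OF t] by blast
  qed
qed

lemma P0_I1: "dia E a b c d \<Longrightarrow> {a,b,c,d} \<in> P0"
  unfolding P0_def by blast

lemma P0_I2: "tri E x y z \<Longrightarrow> (\<And>a b c d. dia E a b c d \<Longrightarrow> {x,y,z} \<inter> {a,b,c,d} = {}) \<Longrightarrow> {x,y,z} \<in> P0"
  unfolding P0_def by blast

lemma P0_D: "X \<in> P0 \<Longrightarrow> (\<exists>a b c d. X = {a,b,c,d} \<and> dia E a b c d) \<or>
     (\<exists>x y z. X = {x,y,z} \<and> tri E x y z \<and> (\<forall>a b c d. dia E a b c d \<longrightarrow> {x,y,z} \<inter> {a,b,c,d} = {}))"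
  unfolding P0_def by (rule CollectD)

lemma dia_V: "dia E a b c d \<Longrightarrow> {a,b,c,d} \<subseteq> V"
  unfolding dia_def using EV1[of a c] EV1[of b c] EV2[of a c] EV2[of a d] by blast

lemma tri_V: "tri E x y z \<Longrightarrow> {x,y,z} \<subseteq> V"
  unfolding tri_def using EV1[of x y] EV2[of x y] EV2[of x z] by blast

lemma P0_sub: "X \<in> P0 \<Longrightarrow> X \<subseteq> V"
proof -
  assume "X \<in> P0"
  from P0_D[OF this] show ?thesis
  proof
    assume "\<exists>a b c d. X = {a,b,c,d} \<and> dia E a b c d"
    then obtain a b c d where "X = {a,b,c,d}" "dia E a b c d" by blast
    then show ?thesis using dia_V by simp
  next
    assume "\<exists>x y z. X = {x,y,z} \<and> tri E x y z \<and> (\<forall>a b c d. dia E a b c d \<longrightarrow> {x,y,z} \<inter> {a,b,c,d} = {})"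
    then obtain x y z where "X = {x,y,z}" "tri E x y z" by blast
    then show ?thesis using tri_V by simp
  qed
qed

lemma P0_cover: "\<Union>P0 = V"
proof
  show "\<Union>P0 \<subseteq> V" using P0_sub by blast
  show "V \<subseteq> \<Union>P0"
  proof
    fix v assume v: "v \<in> V"
    show "v \<in> \<Union>P0"
    proof (cases "\<exists>a b c d. dia E a b c d \<and> v \<in> {a,b,c,d}")
      case True
      then obtain a b c d where "dia E a b c d" "v \<in> {a,b,c,d}" by blast
      then have "{a,b,c,d} \<in> P0" using P0_I1 by blast
      then show ?thesis using \<open>v \<in> {a,b,c,d}\<close> by blast
    next
      case False
      obtain x y where t: "tri E v x y" using in_tri v by blast
      have "{v,x,y} \<inter> {a,b,c,d} = {}" if D: "dia E a b c d" for a b c d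
      proof (rule ccontr)
        assume "{v,x,y} \<inter> {a,b,c,d} \<noteq> {}"
        then have "{v,x,y} \<subseteq> {a,b,c,d}" using tri_meets_dia[OF D t] by blast
        then show False using False D by blast
      qed
      then have "{v,x,y} \<in> P0" using P0_I2[OF t] by blast
      then show ?thesis by blast
    qed
  qed
qed

lemma P0_disj: assumes A: "A \<in> P0" and B: "B \<in> P0" and ne: "A \<inter> B \<noteq> {}" shows "A = B"
proof (cases "\<exists>a b c d. A = {a,b,c,d} \<and> dia E a b c d")
  case True
  then obtain a b c d where a: "A = {a,b,c,d}" "dia E a b c d" by blast
  show ?thesis
  proof (cases "\<exists>a b c d. B = {a,b,c,d} \<and> dia E a b c d")
    case True
    then obtain a' b' c' d' where b: "B = {a',b',c',d'}" "dia E a' b' c' d'" by blast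
    show ?thesis using dia_eq[OF a(2) b(2)] a b ne by simp
  next
    case False
    then obtain x y z where "B = {x,y,z}" "\<forall>a b c d. dia E a b c d \<longrightarrow> {x,y,z} \<inter> {a,b,c,d} = {}" using P0_D[OF B] by blast
    then have "\<forall>a b c d. dia E a b c d \<longrightarrow> B \<inter> {a,b,c,d} = {}" by simp
    then show ?thesis using a ne by blast
  qed
next
  case False
  then obtain x y z where tA: "A = {x,y,z}" "tri E x y z" "\<forall>a b c d. dia E a b c d \<longrightarrow> {x,y,z} \<inter> {a,b,c,d} = {}"
    using P0_D[OF A] by blast
  show ?thesis
  proof (cases "\<exists>a b c d. B = {a,b,c,d} \<and> dia E a b c d")
    case True
    then show ?thesis using tA(1,3) ne by blast
  next
    case False
    then obtain x' y' z' where tB: "B = {x',y',z'}" "tri E x' y' z'" "\<forall>a b c d. dia E a b c d \<longrightarrow> {x',y',z'} \<inter> {a,b,c,d} = {}"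
      using P0_D[OF B] by blast
    obtain v where v: "v \<in> A" "v \<in> B" using ne by blast
    obtain p q where pq: "A = {v,p,q}" "tri E v p q" using tri_rot[OF tA(2)] v tA(1) by metis
    obtain p' q' where pq': "B = {v,p',q'}" "tri E v p' q'" using tri_rot[OF tB(2)] v tB(1) by metis
    show ?thesis
    proof (rule ccontr)
      assume "A \<noteq> B"
      then obtain a b c d where "dia E a b c d" "v \<in> {a,b,c,d}"
        using two_tris[OF pq(2) pq'(2)] pq pq' by auto
      then show False using tA(1,3) v by blast
    qed
  qed
qed

lemma P0_units: "X \<in> P0 \<Longrightarrow> induces_triangle E X \<or> induces_diamond E X"
proof -
  assume "X \<in> P0"
  from P0_D[OF this] show ?thesis
  proof
    assume "\<exists>a b c d. X = {a,b,c,d} \<and> dia E a b c d"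
    then show ?thesis unfolding induces_diamond_iff by blast
  next
    assume "\<exists>x y z. X = {x,y,z} \<and> tri E x y z \<and> (\<forall>a b c d. dia E a b c d \<longrightarrow> {x,y,z} \<inter> {a,b,c,d} = {})"
    then show ?thesis unfolding induces_triangle_iff by blast
  qed
qed

lemma P0_partition: "unit_partition V E P0"
  unfolding unit_partition_def using P0_cover P0_disj P0_units by blast

lemma unit_nonempty: "induces_triangle E X \<or> induces_diamond E X \<Longrightarrow> X \<noteq> {}"
  unfolding induces_triangle_iff induces_diamond_iff by blast

lemma partition_unique: assumes Q: "unit_partition V E Q" shows "Q = P0"
proof -
  have cov: "\<Union>Q = V" and dis: "\<And>A B. A \<in> Q \<Longrightarrow> B \<in> Q \<Longrightarrow> A \<noteq> B \<Longrightarrow> A \<inter> B = {}"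
    and un: "\<And>A. A \<in> Q \<Longrightarrow> induces_triangle E A \<or> induces_diamond E A"
    using Q unfolding unit_partition_def by blast+
  have QP: "X \<in> P0" if X: "X \<in> Q" for X
  proof -
    consider "induces_diamond E X" | "induces_triangle E X" using un X by blast
    then show ?thesis
    proof cases
      case 1 then show ?thesis unfolding induces_diamond_iff using P0_I1 by blast
    next
      case 2
      then obtain x y z where xyz: "X = {x,y,z}" "tri E x y z" unfolding induces_triangle_iff by blast
      have "{x,y,z} \<inter> {a,b,c,d} = {}" if D: "dia E a b c d" for a b c d
      proof (rule ccontr)
        assume m: "{x,y,z} \<inter> {a,b,c,d} \<noteq> {}"
        then have sub: "X \<subseteq> {a,b,c,d}" using tri_meets_dia[OF D xyz(2)] xyz by blast
        have c4: "card {a,b,c,d} = 4" using D unfolding dia_def by (simp add: card4_iff)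
        have c3: "card X = 3" using xyz unfolding tri_def by simp
        obtain w where w: "w \<in> {a,b,c,d}" "w \<notin> X"
        proof (rule ccontr)
          assume "\<not> thesis"
          then have "{a,b,c,d} \<subseteq> X" using that by blast
          then have "X = {a,b,c,d}" using sub by blast
          then show False using c4 c3 by simp
        qed
        have "w \<in> V" using w D EV1 EV2 unfolding dia_def by auto
        then obtain Y where Y: "Y \<in> Q" "w \<in> Y" using cov by blast
        have YX: "Y \<inter> X = {}" using dis[OF Y(1) X] Y w by blast
        consider "induces_diamond E Y" | "induces_triangle E Y" using un Y by blast
        then show False
        proof cases
          case 1
          then obtain a' b' c' d' where "Y = {a',b',c',d'}" "dia E a' b' c' d'" unfolding induces_diamond_iff by blast
          moreover have "{a,b,c,d} \<inter> Y \<noteq> {}" using w Y by blast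
          ultimately have "Y = {a,b,c,d}" using dia_eq[OF D] by metis
          then show False using YX sub xyz by blast
        next
          case 2
          then obtain x' y' z' where Y': "Y = {x',y',z'}" "tri E x' y' z'" unfolding induces_triangle_iff by blast
          then have sY: "Y \<subseteq> {a,b,c,d}" using tri_meets_dia[OF D Y'(2)] w Y by blast
          have "card Y = 3" using Y' unfolding tri_def by simp
          then have "card (X \<union> Y) = 6" using c3 YX card_Un_disjoint[of X Y] xyz Y' by simp
          moreover have "card (X \<union> Y) \<le> 4" using card_mono[of "{a,b,c,d}" "X \<union> Y"] sub sY c4 by auto
          ultimately show False by simp
        qed
      qed
      then show ?thesis using P0_I2[OF xyz(2)] xyz(1) by blast
    qed
  qed
  have PQ: "X \<in> Q" if X: "X \<in> P0" for X
  proof -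
    obtain v where v: "v \<in> X" using unit_nonempty[OF P0_units[OF X]] by blast
    then have "v \<in> V" using P0_cover X by blast
    then obtain Y where Y: "Y \<in> Q" "v \<in> Y" using cov by blast
    then have "Y \<in> P0" using QP by blast
    then have "X = Y" using P0_disj[OF X] v Y by blast
    then show ?thesis using Y by blast
  qed
  show ?thesis using QP PQ by blast
qed

lemma num_units_P0: "num_units V E = card P0"
proof -
  have "(THE P. unit_partition V E P) = P0"
    using P0_partition partition_unique by (rule the_equality)
  then show ?thesis unfolding num_units_def by simp
qed

end


context cg begin

abbreviation inf :: "'a set \<Rightarrow> 'a \<Rightarrow> bool" where "inf S x \<equiv> infected V E 2 S x"

lemma inf_step2: "x \<in> V \<Longrightarrow> E x y1 \<Longrightarrow> E x y2 \<Longrightarrow> y1 \<noteq> y2 \<Longrightarrow> inf S y1 \<Longrightarrow> inf S y2 \<Longrightarrow> inf S x"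
  by (rule infected.step[where T="{y1,y2}"]) auto

lemma inf_mono: "inf S x \<Longrightarrow> S \<subseteq> S' \<Longrightarrow> inf S' x"
proof (induction rule: infected.induct)
  case (init x) then show ?case by (auto intro: infected.init)
next
  case (step x T) then show ?case by (auto intro: infected.step)
qed

lemma inf_closed:
  assumes "inf S x" "S \<subseteq> I" "\<And>z. z \<in> V \<Longrightarrow> z \<notin> I \<Longrightarrow> card ({w. E z w} \<inter> I) \<le> 1"
  shows "x \<in> I"
  using assms(1)
proof (induction rule: infected.induct)
  case (init x) then show ?case using assms(2) by blast
next
  case (step x T)
  show ?case
  proof (rule ccontr)
    assume "x \<notin> I"
    have "T \<subseteq> {w. E x w} \<inter> I" using step by auto
    then have "card T \<le> card ({w. E x w} \<inter> I)" using finN by (intro card_mono) auto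
    then show False using assms(3)[OF step(1) \<open>x \<notin> I\<close>] step(3) by simp
  qed
qed

definition Phi :: "'a set \<Rightarrow> nat" where "Phi I = (\<Sum>y\<in>I. card ({w. E y w} - I))"

lemma Phi_insert:
  assumes I: "I \<subseteq> V" and x: "x \<in> V" "x \<notin> I"
  shows "Phi I = (\<Sum>y\<in>I. card ({w. E y w} - insert x I)) + card ({w. E x w} \<inter> I)"
    and "Phi (insert x I) = (\<Sum>y\<in>I. card ({w. E y w} - insert x I)) + card ({w. E x w} - I)"
proof -
  have fI: "finite I" using I finV finite_subset by blast
  have a: "card ({w. E y w} - I) = card ({w. E y w} - insert x I) + (if E y x then 1 else 0)" if "y \<in> I" for y
  proof (cases "E y x")
    case True
    then have e: "{w. E y w} - I = insert x ({w. E y w} - insert x I)" using x by auto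
    have f: "finite ({w. E y w} - insert x I)" using finN by (rule finite_Diff)
    have "card (insert x ({w. E y w} - insert x I)) = Suc (card ({w. E y w} - insert x I))"
      using card_insert_disjoint[OF f] by blast
    then show ?thesis using True e by presburger
  next
    case False
    then have "{w. E y w} - I = {w. E y w} - insert x I" by auto
    then show ?thesis using False by presburger
  qed
  have b: "(\<Sum>y\<in>I. (if E y x then 1 else 0::nat)) = card ({w. E x w} \<inter> I)"
  proof -
    have "(\<Sum>y\<in>I. (if E y x then 1 else 0::nat)) = card {y\<in>I. E y x}"
      using fI by (simp add: sum.If_cases Int_def)
    also have "{y\<in>I. E y x} = {w. E x w} \<inter> I" using Esym by blast
    finally show ?thesis .
  qed
  show "Phi I = (\<Sum>y\<in>I. card ({w. E y w} - insert x I)) + card ({w. E x w} \<inter> I)"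
    unfolding Phi_def using a b by (simp add: sum.distrib)
  have "{w. E x w} - insert x I = {w. E x w} - I" by auto
  then show "Phi (insert x I) = (\<Sum>y\<in>I. card ({w. E y w} - insert x I)) + card ({w. E x w} - I)"
    unfolding Phi_def using fI x by (simp add: add.commute)
qed

lemma card_split3: assumes "x \<in> V" shows "card ({w. E x w} - I) + card ({w. E x w} \<inter> I) = 3"
proof -
  have "card ({w. E x w} - I) + card ({w. E x w} \<inter> I) = card {w. E x w}"
    using card_Int_Diff[OF finN, of x I] by simp
  then show ?thesis using cardN assms by simp
qed

lemma Phi_bound:
  "card (V - I) = n \<Longrightarrow> I \<subseteq> V \<Longrightarrow> I \<noteq> V \<Longrightarrow> (\<forall>x\<in>V. inf I x) \<Longrightarrow> card (V - I) + 2 \<le> Phi I"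
proof (induction n arbitrary: I)
  case 0
  then have "V - I = {}" using finV by auto
  then have False using 0(2,3) by blast
  then show ?case by blast
next
  case (Suc n)
  have "\<exists>x\<in>V - I. 2 \<le> card ({w. E x w} \<inter> I)"
  proof (rule ccontr)
    assume nt: "\<not> ?thesis"
    have h: "card ({w. E z w} \<inter> I) \<le> 1" if "z \<in> V" "z \<notin> I" for z
    proof -
      have "\<not> 2 \<le> card ({w. E z w} \<inter> I)" using nt that by blast
      then show ?thesis by linarith
    qed
    have "x \<in> I" if "x \<in> V" for x using inf_closed[OF _ subset_refl h] Suc.prems(4) that by blast
    then have "\<forall>x\<in>V. x \<in> I" by blast
    then show False using Suc.prems(2,3) by blast
  qed
  then obtain x where x: "x \<in> V" "x \<notin> I" and j: "2 \<le> card ({w. E x w} \<inter> I)" by blast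
  define A where "A = (\<Sum>y\<in>I. card ({w. E y w} - insert x I))"
  have p1: "Phi I = A + card ({w. E x w} \<inter> I)" and p2: "Phi (insert x I) = A + card ({w. E x w} - I)"
    using Phi_insert[OF Suc.prems(2) x] unfolding A_def by auto
  have s3: "card ({w. E x w} - I) + card ({w. E x w} \<inter> I) = 3" using card_split3 x by blast
  show ?case
  proof (cases "insert x I = V")
    case True
    have VI: "V - I = {x}" using x True by auto
    have "{w. E x w} - I = {}" using True x EV2 Eirr by blast
    then have "card ({w. E x w} - I) = 0" by (metis card.empty)
    then have "card ({w. E x w} \<inter> I) = 3" using s3 by linarith
    then show ?thesis using p1 VI by simp
  next
    case False
    have "V - insert x I = (V - I) - {x}" by blast
    then have c: "card (V - insert x I) = n" using Suc.prems(1) x by (simp add: card_Diff_singleton)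
    have "\<forall>y\<in>V. inf (insert x I) y" using Suc.prems(4) inf_mono by blast
    then have "card (V - insert x I) + 2 \<le> Phi (insert x I)"
      using Suc.IH[OF c] Suc.prems(2) x False by blast
    then show ?thesis using c Suc.prems(1) p1 p2 s3 j by linarith
  qed
qed

lemma Phi_le: "finite S \<Longrightarrow> S \<subseteq> V \<Longrightarrow> Phi S \<le> 3 * card S"
proof -
  assume f: "finite S" and s: "S \<subseteq> V"
  have "Phi S \<le> (\<Sum>y\<in>S. 3)" unfolding Phi_def
  proof (rule sum_mono)
    fix y assume "y \<in> S"
    then have "card ({w. E y w} - S) \<le> card {w. E y w}" using finN by (intro card_mono) auto
    then show "card ({w. E y w} - S) \<le> 3" using cardN \<open>y \<in> S\<close> s by auto
  qed
  then show ?thesis by simp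
qed

lemma perc_lower_count: assumes "percolating V E 2 S" "V \<noteq> {}" shows "card V + 2 \<le> 4 * card S"
proof -
  have s: "S \<subseteq> V" and a: "\<forall>x\<in>V. inf S x" using assms unfolding percolating_def by auto
  have fS: "finite S" using s finV finite_subset by blast
  show ?thesis
  proof (cases "S = V")
    case True
    then have "card V \<ge> 1" using assms(2) finV by (simp add: Suc_leI card_gt_0_iff)
    then show ?thesis using True by simp
  next
    case False
    have "card (V - S) + 2 \<le> Phi S" using Phi_bound[OF refl s False a] .
    moreover have "Phi S \<le> 3 * card S" using Phi_le fS s by blast
    moreover have "card (V - S) = card V - card S" using s fS by (simp add: card_Diff_subset)
    moreover have "card S \<le> card V" using s finV card_mono by blast
    ultimately show ?thesis by linarith
  qed
qed

end


context cg begin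

definition istri :: "'a set \<Rightarrow> bool" where "istri X \<longleftrightarrow> (\<exists>x y z. X = {x,y,z} \<and> tri E x y z)"
definition isdia :: "'a set \<Rightarrow> bool" where "isdia X \<longleftrightarrow> (\<exists>a b c d. X = {a,b,c,d} \<and> dia E a b c d)"

lemma P0_cases: "X \<in> P0 \<Longrightarrow> istri X \<or> isdia X"
proof -
  assume "X \<in> P0"
  from P0_D[OF this] show ?thesis
  proof
    assume "\<exists>a b c d. X = {a,b,c,d} \<and> dia E a b c d" then show ?thesis unfolding isdia_def by blast
  next
    assume "\<exists>x y z. X = {x,y,z} \<and> tri E x y z \<and> (\<forall>a b c d. dia E a b c d \<longrightarrow> {x,y,z} \<inter> {a,b,c,d} = {})"
    then show ?thesis unfolding istri_def by blast
  qed
qed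

lemma istri_card: "istri X \<Longrightarrow> card X = 3" unfolding istri_def tri_def by auto
lemma isdia_card: "isdia X \<Longrightarrow> card X = 4" unfolding isdia_def dia_def by (auto simp: card4_iff)

lemma P0_fin: "X \<in> P0 \<Longrightarrow> finite X" using P0_sub finV finite_subset by blast
lemma P0_ne: "X \<in> P0 \<Longrightarrow> X \<noteq> {}" using unit_nonempty P0_units by blast

lemma unit_of: "v \<in> V \<Longrightarrow> \<exists>X\<in>P0. v \<in> X" using P0_cover by blast

lemma two_inside: assumes X: "X \<in> P0" and x: "x \<in> X"
  shows "\<exists>y z. y \<in> X \<and> z \<in> X \<and> y \<noteq> z \<and> E x y \<and> E x z"
proof -
  from P0_cases[OF X] show ?thesis
  proof
    assume "istri X"
    then obtain a b c where X3: "X = {a,b,c}" "tri E a b c" unfolding istri_def by blast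
    then have t: "a \<noteq> b" "a \<noteq> c" "b \<noteq> c" "E a b" "E a c" "E b c" "E b a" "E c a" "E c b"
      unfolding tri_def using Esym by auto
    consider "x = a" | "x = b" | "x = c" using x X3 by blast
    then show ?thesis
    proof cases
      case 1 then show ?thesis using t X3 by blast
    next
      case 2 then show ?thesis using t X3 by blast
    next
      case 3 then show ?thesis using t X3 by blast
    qed
  next
    assume "isdia X"
    then obtain a b c d where X4: "X = {a,b,c,d}" "dia E a b c d" unfolding isdia_def by blast
    then have t: "c \<noteq> d" "a \<noteq> c" "a \<noteq> d" "b \<noteq> c" "b \<noteq> d" "a \<noteq> b" "E a c" "E a d" "E b c" "E b d" "E c d"
      "E c a" "E d a" "E c b" "E d b" "E d c"
      unfolding dia_def using Esym by auto
    consider "x = a" | "x = b" | "x = c" | "x = d" using x X4 by blast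
    then show ?thesis
    proof cases
      case 1 then show ?thesis using t X4 by blast
    next
      case 2 then show ?thesis using t X4 by blast
    next
      case 3 then show ?thesis using t X4 by blast
    next
      case 4 then show ?thesis using t X4 by blast
    qed
  qed
qed

lemma out_le1: assumes X: "X \<in> P0" and x: "x \<in> X" shows "card ({w. E x w} - X) \<le> 1"
proof -
  obtain y z where yz: "y \<in> X" "z \<in> X" "y \<noteq> z" "E x y" "E x z" using two_inside[OF X x] by blast
  have "{y,z} \<subseteq> {w. E x w} \<inter> X" using yz by blast
  then have "card {y,z} \<le> card ({w. E x w} \<inter> X)" using finN by (intro card_mono) auto
  then have "2 \<le> card ({w. E x w} \<inter> X)" using yz(3) by simp
  moreover have "x \<in> V" using x P0_sub X by blast
  moreover have "card ({w. E x w} - X) + card ({w. E x w} \<inter> X) = 3" using card_split3 calculation(2) by blast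
  ultimately show ?thesis by linarith
qed

lemma unit_hit: assumes p: "percolating V E 2 S" and X: "X \<in> P0" shows "S \<inter> X \<noteq> {}"
proof
  assume SX: "S \<inter> X = {}"
  have sV: "S \<subseteq> V" and a: "\<forall>x\<in>V. inf S x" using p unfolding percolating_def by auto
  have h: "card ({w. E z w} \<inter> (V - X)) \<le> 1" if "z \<in> V" "z \<notin> V - X" for z
  proof -
    have zX: "z \<in> X" using that by blast
    have "{w. E z w} \<inter> (V - X) \<subseteq> {w. E z w} - X" by blast
    then have "card ({w. E z w} \<inter> (V - X)) \<le> card ({w. E z w} - X)"
      using finN by (intro card_mono) auto
    then show ?thesis using out_le1[OF X zX] by linarith
  qed
  have SI: "S \<subseteq> V - X" using sV SX by blast
  obtain x where x: "x \<in> X" using P0_ne[OF X] by blast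
  then have xV: "x \<in> V" using P0_sub X by blast
  have "x \<in> V - X" using inf_closed[OF _ SI h] a xV by blast
  then show False using x by blast
qed

lemma units_le_perc: assumes p: "percolating V E 2 S" shows "card P0 \<le> card S"
proof -
  have sV: "S \<subseteq> V" using p unfolding percolating_def by auto
  have fS: "finite S" using sV finV finite_subset by blast
  define g where "g X = (SOME s. s \<in> S \<inter> X)" for X
  have g: "g X \<in> S \<inter> X" if XP: "X \<in> P0" for X
  proof -
    obtain s where "s \<in> S \<inter> X" using unit_hit[OF p XP] by blast
    then show ?thesis unfolding g_def by (rule someI)
  qed
  have "inj_on g P0"
  proof (rule inj_onI)
    fix X Y assume XY: "X \<in> P0" "Y \<in> P0" "g X = g Y"
    then have "X \<inter> Y \<noteq> {}" using g[OF XY(1)] g[OF XY(2)] by auto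
    then show "X = Y" using P0_disj XY by blast
  qed
  moreover have "g ` P0 \<subseteq> S" using g by blast
  ultimately show ?thesis using card_inj_on_le fS by blast
qed

lemma closed2:
  assumes X: "X \<in> P0" and xy: "x \<in> X" "y \<in> X" "x \<noteq> y" "inf S x" "inf S y" and z: "z \<in> X"
  shows "inf S z"
proof -
  have XV: "X \<subseteq> V" using P0_sub X by blast
  from P0_cases[OF X] show ?thesis
  proof
    assume "istri X"
    then obtain a b c where X3: "X = {a,b,c}" "tri E a b c" unfolding istri_def by blast
    then have adj: "\<And>u v. u \<in> X \<Longrightarrow> v \<in> X \<Longrightarrow> u \<noteq> v \<Longrightarrow> E u v" unfolding tri_def using Esym by auto
    show ?thesis
    proof (cases "z = x \<or> z = y")
      case True then show ?thesis using xy by blast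
    next
      case False
      then show ?thesis using inf_step2[of z x y S] adj[OF z xy(1)] adj[OF z xy(2)] xy z XV by blast
    qed
  next
    assume "isdia X"
    then obtain a b c d where X4: "X = {a,b,c,d}" "dia E a b c d" unfolding isdia_def by blast
    then have hub: "\<And>u. u \<in> X \<Longrightarrow> u \<noteq> c \<Longrightarrow> E c u" "\<And>u. u \<in> X \<Longrightarrow> u \<noteq> d \<Longrightarrow> E d u"
      and cd: "c \<noteq> d" "c \<in> X" "d \<in> X"
      unfolding dia_def using Esym by auto
    have ic: "inf S c"
    proof (cases "c = x \<or> c = y")
      case True then show ?thesis using xy by blast
    next
      case False
      then show ?thesis using inf_step2[of c x y S] hub(1)[OF xy(1)] hub(1)[OF xy(2)] xy cd XV by blast
    qed
    have id: "inf S d"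
    proof (cases "d = x \<or> d = y")
      case True then show ?thesis using xy by blast
    next
      case False
      then show ?thesis using inf_step2[of d x y S] hub(2)[OF xy(1)] hub(2)[OF xy(2)] xy cd XV by blast
    qed
    show ?thesis
    proof (cases "z = c \<or> z = d")
      case True then show ?thesis using ic id by blast
    next
      case False
      then have "E z c" "E z d" using hub z Esym by auto
      then show ?thesis using inf_step2[of z c d S] ic id cd z XV by blast
    qed
  qed
qed

end



lemma rtranclp_sym: assumes "\<And>u v. r u v \<Longrightarrow> r v u" and "r\<^sup>*\<^sup>* x y" shows "r\<^sup>*\<^sup>* y x"
  using assms(2)
proof (induction rule: rtranclp_induct)
  case (step b c)
  then show ?case using assms(1) converse_rtranclp_into_rtranclp by metis
qed simp

lemma rtranclp_transfer:
  assumes "r\<^sup>*\<^sup>* x y" "x \<in> R" "\<And>u w. u \<in> R \<Longrightarrow> r u w \<Longrightarrow> w \<in> R \<and> s u w"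
  shows "s\<^sup>*\<^sup>* x y"
proof -
  have "s\<^sup>*\<^sup>* x y \<and> y \<in> R" using assms(1)
  proof (induction rule: rtranclp_induct)
    case base then show ?case using assms(2) by simp
  next
    case (step b c)
    then have "c \<in> R" "s b c" using assms(3) by blast+
    then show ?case using step rtranclp.rtrancl_into_rtrancl by metis
  qed
  then show ?thesis by blast
qed

context cg begin

definition dX :: "('a \<Rightarrow> 'a \<Rightarrow> bool) \<Rightarrow> 'a \<Rightarrow> 'a set \<Rightarrow> nat" where
  "dX A q X = (LEAST n. \<exists>v\<in>X. (A ^^ n) q v)"

lemma dX_le: "v \<in> X \<Longrightarrow> (A ^^ n) q v \<Longrightarrow> dX A q X \<le> n"
  unfolding dX_def by (rule Least_le) blast

lemma dX_ex: assumes "v \<in> X" "A\<^sup>*\<^sup>* q v" shows "\<exists>x\<in>X. (A ^^ dX A q X) q x"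
proof -
  obtain n where "(A ^^ n) q v" using assms(2) rtranclp_imp_relpowp by metis
  then have "\<exists>n. \<exists>v\<in>X. (A ^^ n) q v" using assms(1) by blast
  then show ?thesis unfolding dX_def by (rule LeastI_ex)
qed

lemma spread:
  assumes AE: "\<And>u v. A u v \<Longrightarrow> E u v"
    and reach: "\<And>v. v \<in> V \<Longrightarrow> A\<^sup>*\<^sup>* q v"
    and W: "W \<in> P0" "q \<in> W" "\<And>z. z \<in> W \<Longrightarrow> inf S z"
    and cond: "\<And>X. X \<in> P0 \<Longrightarrow> X \<noteq> W \<Longrightarrow> \<exists>x\<in>X. (A ^^ dX A q X) q x \<and>
        ((\<exists>v. v \<notin> X \<and> A v x) \<longrightarrow> (\<exists>y\<in>X. y \<noteq> x \<and> E x y \<and> inf S y))"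
  shows "\<forall>X\<in>P0. \<forall>z\<in>X. inf S z"
proof -
  have main: "\<forall>X\<in>P0. dX A q X = n \<longrightarrow> (\<forall>z\<in>X. inf S z)" for n
  proof (induction n rule: less_induct)
    case (less n)
    show ?case
    proof (intro ballI impI)
      fix X z assume X: "X \<in> P0" and dn: "dX A q X = n" and z: "z \<in> X"
      show "inf S z"
      proof (cases "X = W")
        case True then show ?thesis using W z by blast
      next
        case False
        obtain x where x: "x \<in> X" "(A ^^ n) q x"
          and c: "(\<exists>v. v \<notin> X \<and> A v x) \<longrightarrow> (\<exists>y\<in>X. y \<noteq> x \<and> E x y \<and> inf S y)"
          using cond[OF X False] dn by blast
        show ?thesis
        proof (cases n)
          case 0
          then have "x = q" using x by simp
          then have "X \<inter> W \<noteq> {}" using x W by blast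
          then show ?thesis using P0_disj[OF X W(1)] False by blast
        next
          case (Suc k)
          then obtain v where v: "(A ^^ k) q v" "A v x" using x(2) by (metis relpowp_Suc_E)
          have vX: "v \<notin> X"
          proof
            assume "v \<in> X"
            then have "dX A q X \<le> k" using dX_le v by blast
            then show False using dn Suc by simp
          qed
          obtain y where y: "y \<in> X" "y \<noteq> x" "E x y" "inf S y" using c v vX by blast
          have vV: "v \<in> V" using AE[OF v(2)] EV1 by blast
          obtain Y where Y: "Y \<in> P0" "v \<in> Y" using unit_of[OF vV] by blast
          have "dX A q Y \<le> k" using dX_le[OF Y(2) v(1)] .
          then have "dX A q Y < n" using Suc by simp
          then have iv: "inf S v" using less.IH Y by blast
          have xV: "x \<in> V" using AE[OF v(2)] EV2 by blast
          have "v \<noteq> y" using vX y by blast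
          then have "inf S x" using inf_step2[of x v y S] xV Esym[OF AE[OF v(2)]] y iv by blast
          then show ?thesis using closed2[OF X x(1) y(1) y(2)[symmetric] _ y(4) z] by blast
        qed
      qed
    qed
  qed
  show ?thesis using main by blast
qed

end


context cg begin

lemma tri_adj: "istri X \<Longrightarrow> x \<in> X \<Longrightarrow> y \<in> X \<Longrightarrow> x \<noteq> y \<Longrightarrow> E x y"
  unfolding istri_def tri_def using Esym by blast

lemma tri_other: assumes "istri X" "x \<in> X" shows "\<exists>y\<in>X. y \<noteq> x"
proof -
  obtain a b c where X3: "X = {a,b,c}" "a \<noteq> b" using assms(1) unfolding istri_def tri_def by blast
  show ?thesis
  proof (cases "x = a")
    case True
    have "b \<in> X" using X3 by simp
    then show ?thesis using True X3(2) by metis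
  next
    case False
    have "a \<in> X" using X3 by simp
    then show ?thesis using False by metis
  qed
qed

lemma hub_ex: "isdia X \<Longrightarrow> \<exists>h\<in>X. \<forall>w\<in>X. w \<noteq> h \<longrightarrow> E h w"
  unfolding isdia_def dia_def using Esym by blast

lemma hub_nb: assumes D: "isdia X" and h: "h \<in> X" "\<forall>w\<in>X. w \<noteq> h \<longrightarrow> E h w" and e: "E h v"
  shows "v \<in> X"
proof -
  have fX: "finite X" using D unfolding isdia_def by auto
  have "card X = 4" using isdia_card[OF D] .
  then have c3: "card (X - {h}) = 3" using h(1) fX by (simp add: card_Diff_singleton)
  have s: "X - {h} \<subseteq> {w. E h w}" using h by blast
  have "h \<in> V" using e EV1 by blast
  then have "card {w. E h w} = 3" using cardN by blast
  then have "X - {h} = {w. E h w}" using card_subset_eq[OF finN s] c3 by simp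
  then show ?thesis using e by blast
qed

lemma tri_out: assumes T: "istri X" and x: "x \<in> X" shows "\<exists>x'. E x x' \<and> x' \<notin> X"
proof -
  obtain a b c where X3: "X = {a,b,c}" "tri E a b c" using T unfolding istri_def by blast
  obtain y z where yz: "y \<in> X" "z \<in> X" "y \<noteq> x" "z \<noteq> x" "y \<noteq> z"
    using X3 x unfolding tri_def by blast
  then have "E x y" "E x z" using tri_adj[OF T] x by auto
  then obtain w where w: "E x w" "w \<noteq> y" "w \<noteq> z" using third yz(5) by blast
  have "w \<noteq> x" using w(1) Ene by blast
  have "X = {x,y,z}" using X3 x yz unfolding tri_def by blast
  then have "w \<notin> X" using w \<open>w \<noteq> x\<close> by blast
  then show ?thesis using w by blast
qed

lemma out_unique: assumes X: "X \<in> P0" and x: "x \<in> X" and v: "E x v" "v \<notin> X" and w: "E x w" "w \<notin> X"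
  shows "v = w"
proof (rule ccontr)
  assume "v \<noteq> w"
  then have "card {v,w} = 2" by simp
  moreover have "{v,w} \<subseteq> {w. E x w} - X" using v w by blast
  ultimately have "2 \<le> card ({w. E x w} - X)" using finN card_mono[of "{w. E x w} - X" "{v,w}"] by auto
  then show False using out_le1[OF X x] by simp
qed

lemma isdia_not_tri: "isdia X \<Longrightarrow> \<not> istri X" using isdia_card istri_card by fastforce

lemma unit_conn: assumes X: "X \<in> P0" and vw: "v \<in> X" "w \<in> X" "v \<noteq> w"
  shows "E v w \<or> (\<exists>h\<in>X. E v h \<and> E h w)"
proof -
  from P0_cases[OF X] show ?thesis
  proof
    assume "istri X" then show ?thesis using tri_adj vw by blast
  next
    assume D: "isdia X"
    then obtain h where h: "h \<in> X" "\<forall>u\<in>X. u \<noteq> h \<longrightarrow> E h u" using hub_ex by blast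
    show ?thesis
    proof (cases "v = h \<or> w = h")
      case True
      then show ?thesis
      proof
        assume "v = h" then have "E v w" using h(2) vw by auto
        then show ?thesis by blast
      next
        assume "w = h" then have "E w v" using h(2) vw by auto
        then show ?thesis using Esym by blast
      qed
    next
      case False
      then have "E h v" "E h w" using h(2) vw by auto
      then show ?thesis using h(1) Esym by blast
    qed
  qed
qed

definition rem :: "'a \<Rightarrow> 'a \<Rightarrow> 'a \<Rightarrow> 'a \<Rightarrow> bool" where
  "rem p q u v \<longleftrightarrow> E u v \<and> \<not> ((u = p \<and> v = q) \<or> (u = q \<and> v = p))"

lemma rem_sym: "rem p q u v \<Longrightarrow> rem p q v u" unfolding rem_def using Esym by blast

lemma finP0: "finite P0"
proof -
  have "P0 \<subseteq> Pow V" using P0_sub by blast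
  then show ?thesis using finV finite_subset by blast
qed

lemma ub_tri:
  assumes U: "U \<in> P0" "istri U" and p: "p \<in> U" and pq: "E p q" and q: "q \<notin> U"
    and bk: "(rem p q)\<^sup>*\<^sup>* q p"
  shows "\<exists>S. percolating V E 2 S \<and> card S \<le> card P0"
proof -
  let ?A = "rem p q"
  have qV: "q \<in> V" using pq EV2 by blast
  have reach: "?A\<^sup>*\<^sup>* q v" if v: "v \<in> V" for v
  proof -
    have "E\<^sup>*\<^sup>* q v" using conn qV v unfolding graph_connected_def by blast
    then show ?thesis
    proof (induction rule: rtranclp_induct)
      case base then show ?case by simp
    next
      case (step b c)
      show ?case
      proof (cases "?A b c")
        case True then show ?thesis using step(3) by (metis rtranclp.rtrancl_into_rtrancl)
      next
        case False
        then have "(b = p \<and> c = q) \<or> (b = q \<and> c = p)" using step(2) unfolding rem_def by blast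
        then show ?thesis
        proof
          assume "b = p \<and> c = q" then show ?thesis by simp
        next
          assume "b = q \<and> c = p" then show ?thesis using bk by simp
        qed
      qed
    qed
  qed
  obtain W where W: "W \<in> P0" "q \<in> W" using unit_of[OF qV] by blast
  have WU: "W \<noteq> U" using W q by blast
  define r where "r X = (SOME x. x \<in> X \<and> (?A ^^ dX ?A q X) q x)" for X
  have r: "r X \<in> X \<and> (?A ^^ dX ?A q X) q (r X)" if X: "X \<in> P0" for X
  proof -
    obtain v where v: "v \<in> X" using P0_ne[OF X] by blast
    then have "v \<in> V" using P0_sub X by blast
    then obtain x where "x \<in> X" "(?A ^^ dX ?A q X) q x" using dX_ex[OF v reach] by blast
    then show ?thesis unfolding r_def by (rule someI[where x=x, OF conjI])
  qed
  define s where "s X = (if X = U then p else if istri X then (SOME y. y \<in> X \<and> y \<noteq> r X)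
      else (SOME h. h \<in> X \<and> (\<forall>w\<in>X. w \<noteq> h \<longrightarrow> E h w)))" for X
  have s_tri: "s X \<in> X \<and> s X \<noteq> r X" if X: "X \<in> P0" "istri X" "X \<noteq> U" for X
  proof -
    obtain y where "y \<in> X" "y \<noteq> r X" using tri_other[OF X(2)] r[OF X(1)] by blast
    then have "(SOME y. y \<in> X \<and> y \<noteq> r X) \<in> X \<and> (SOME y. y \<in> X \<and> y \<noteq> r X) \<noteq> r X"
      by (rule someI[where x=y, OF conjI])
    then show ?thesis unfolding s_def using X by simp
  qed
  have s_dia: "s X \<in> X \<and> (\<forall>w\<in>X. w \<noteq> s X \<longrightarrow> E (s X) w)" if X: "X \<in> P0" "isdia X" for X
  proof -
    have nt: "\<not> istri X" "X \<noteq> U" using isdia_not_tri X U(2) by auto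
    obtain h where "h \<in> X" "\<forall>w\<in>X. w \<noteq> h \<longrightarrow> E h w" using hub_ex[OF X(2)] by blast
    then have "(SOME h. h \<in> X \<and> (\<forall>w\<in>X. w \<noteq> h \<longrightarrow> E h w)) \<in> X \<and>
        (\<forall>w\<in>X. w \<noteq> (SOME h. h \<in> X \<and> (\<forall>w\<in>X. w \<noteq> h \<longrightarrow> E h w)) \<longrightarrow> E (SOME h. h \<in> X \<and> (\<forall>w\<in>X. w \<noteq> h \<longrightarrow> E h w)) w)"
      by (rule someI[where x=h, OF conjI])
    then show ?thesis unfolding s_def using nt by simp
  qed
  have sU: "s U = p" unfolding s_def by simp
  have s_in: "s X \<in> X" if X: "X \<in> P0" for X
  proof (cases "X = U")
    case True then show ?thesis using sU p by simp
  next
    case False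
    then show ?thesis using s_tri s_dia P0_cases X by blast
  qed
  define S where "S = s ` P0"
  have SV: "S \<subseteq> V" unfolding S_def using s_in P0_sub by blast
  have cardS: "card S \<le> card P0" unfolding S_def using finP0 card_image_le by blast
  have inS: "inf S (s X)" if "X \<in> P0" for X unfolding S_def using that by (auto intro: infected.init)
  have pS: "inf S p" using inS[OF U(1)] sU by simp
  have rW: "r W = q"
  proof -
    have "(?A ^^ 0) q q" by simp
    then have "dX ?A q W = 0" using dX_le[OF W(2)] by fastforce
    then show ?thesis using r[OF W(1)] by simp
  qed
  have sWq: "s W \<noteq> q \<and> E q (s W)"
  proof (cases "istri W")
    case True
    then have "s W \<noteq> q" using s_tri[OF W(1) True WU] rW by simp
    then show ?thesis using tri_adj[OF True W(2) s_in[OF W(1)]] by blast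
  next
    case False
    then have D: "isdia W" using P0_cases W(1) by blast
    have h: "s W \<in> W" "\<forall>w\<in>W. w \<noteq> s W \<longrightarrow> E (s W) w" using s_dia[OF W(1) D] by auto
    have "p \<notin> W" using P0_disj[OF W(1) U(1)] WU p by blast
    have "s W \<noteq> q"
    proof
      assume "s W = q"
      then have "p \<in> W" using hub_nb[OF D h(1) h(2)] Esym[OF pq] by simp
      then show False using \<open>p \<notin> W\<close> by blast
    qed
    moreover have "E (s W) q" using h(2) W(2) calculation by auto
    ultimately show ?thesis using Esym by blast
  qed
  have pW: "p \<notin> W" using P0_disj[OF W(1) U(1)] WU p by blast
  have iq: "inf S q"
    using inf_step2[of q p "s W" S] qV Esym[OF pq] sWq pS inS[OF W(1)] pW s_in[OF W(1)] by metis
  have Winf: "\<And>z. z \<in> W \<Longrightarrow> inf S z"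
    using closed2[OF W(1) W(2) s_in[OF W(1)]] sWq iq inS[OF W(1)] by metis
  have cond: "\<exists>x\<in>X. (?A ^^ dX ?A q X) q x \<and>
        ((\<exists>v. v \<notin> X \<and> ?A v x) \<longrightarrow> (\<exists>y\<in>X. y \<noteq> x \<and> E x y \<and> inf S y))"
    if X: "X \<in> P0" "X \<noteq> W" for X
  proof -
    have rx: "r X \<in> X" "(?A ^^ dX ?A q X) q (r X)" using r[OF X(1)] by auto
    have "(\<exists>v. v \<notin> X \<and> ?A v (r X)) \<longrightarrow> (\<exists>y\<in>X. y \<noteq> r X \<and> E (r X) y \<and> inf S y)"
    proof
      assume "\<exists>v. v \<notin> X \<and> ?A v (r X)"
      then obtain v where v: "v \<notin> X" "?A v (r X)" by blast
      have y: "s X \<in> X" "inf S (s X)" using s_in inS X by auto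
      show "\<exists>y\<in>X. y \<noteq> r X \<and> E (r X) y \<and> inf S y"
      proof (cases "X = U")
        case True
        have "r X \<noteq> p"
        proof
          assume rp: "r X = p"
          have ev: "E p v" "v \<noteq> q" using v rp Esym unfolding rem_def by auto
          have "v = q" using out_unique[OF U(1) p ev(1)] v(1) True pq q by blast
          then show False using ev(2) by blast
        qed
        then show ?thesis using True sU tri_adj[OF U(2)] rx(1) p pS by metis
      next
        case False
        show ?thesis
        proof (cases "istri X")
          case True
          then show ?thesis using s_tri[OF X(1) True False] tri_adj[OF True] rx(1) y by metis
        next
          case nT: False
          then have D: "isdia X" using P0_cases X(1) by blast
          have h: "s X \<in> X" "\<forall>w\<in>X. w \<noteq> s X \<longrightarrow> E (s X) w" using s_dia[OF X(1) D] by auto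
          have "r X \<noteq> s X"
          proof
            assume "r X = s X"
            then have "v \<in> X" using hub_nb[OF D h(1) h(2)] v(2) Esym unfolding rem_def by metis
            then show False using v(1) by blast
          qed
          then show ?thesis using h rx(1) y Esym by metis
        qed
      qed
    qed
    then show ?thesis using rx by blast
  qed
  have AE: "\<And>u v. ?A u v \<Longrightarrow> E u v" unfolding rem_def by blast
  have all: "\<forall>X\<in>P0. \<forall>z\<in>X. inf S z"
    using spread[of ?A q W S, OF AE reach W(1) W(2) Winf cond] by blast
  have "percolating V E 2 S" unfolding percolating_def using SV all unit_of by blast
  then show ?thesis using cardS by blast
qed

end


context cg begin

definition R :: "'a \<Rightarrow> 'a \<Rightarrow> 'a set" where "R p q = {v. (rem p q)\<^sup>*\<^sup>* q v}"
definition trout :: "'a set \<Rightarrow> 'a \<Rightarrow> 'a \<Rightarrow> bool" where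
  "trout U p q \<longleftrightarrow> U \<in> P0 \<and> istri U \<and> p \<in> U \<and> E p q \<and> q \<notin> U"

lemma R_start: "q \<in> R p q" unfolding R_def by simp

lemma R_sub: assumes "E p q" shows "R p q \<subseteq> V"
proof
  fix v assume "v \<in> R p q"
  then have "(rem p q)\<^sup>*\<^sup>* q v" unfolding R_def by simp
  then show "v \<in> V"
  proof (induction rule: rtranclp_induct)
    case base then show ?case using assms EV2 by blast
  next
    case (step b c) then show ?case using EV2 unfolding rem_def by blast
  qed
qed

lemma R_step: "v \<in> R p q \<Longrightarrow> rem p q v w \<Longrightarrow> w \<in> R p q"
  unfolding R_def by (simp add: rtranclp.rtrancl_into_rtrancl)

lemma handshake: "finite C \<Longrightarrow> even (\<Sum>v\<in>C. card ({w. E v w} \<inter> C))"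
proof (induction rule: finite_induct)
  case empty then show ?case by simp
next
  case (insert x C)
  have a: "card ({w. E v w} \<inter> insert x C) = card ({w. E v w} \<inter> C) + (if E v x then 1 else 0)"
    if v: "v \<in> C" for v
  proof (cases "E v x")
    case True
    then have e: "{w. E v w} \<inter> insert x C = insert x ({w. E v w} \<inter> C)" by auto
    have f: "finite ({w. E v w} \<inter> C)" using insert(1) by simp
    have "x \<notin> {w. E v w} \<inter> C" using insert(2) by blast
    then have "card (insert x ({w. E v w} \<inter> C)) = Suc (card ({w. E v w} \<inter> C))"
      using card_insert_disjoint[OF f] by blast
    then show ?thesis using e True by presburger
  next
    case False
    then have "{w. E v w} \<inter> insert x C = {w. E v w} \<inter> C" by auto
    then show ?thesis using False by presburger
  qed
  have b: "(\<Sum>v\<in>C. (if E v x then 1 else 0::nat)) = card ({w. E x w} \<inter> C)"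
  proof -
    have "(\<Sum>v\<in>C. (if E v x then 1 else 0::nat)) = card {y\<in>C. E y x}"
      using insert(1) by (simp add: sum.If_cases Int_def)
    also have "{y\<in>C. E y x} = {w. E x w} \<inter> C" using Esym by blast
    finally show ?thesis .
  qed
  have c: "{w. E x w} \<inter> insert x C = {w. E x w} \<inter> C" by auto
  have "(\<Sum>v\<in>insert x C. card ({w. E v w} \<inter> insert x C))
      = card ({w. E x w} \<inter> insert x C) + (\<Sum>v\<in>C. card ({w. E v w} \<inter> insert x C))"
    using insert(1,2) by simp
  also have "(\<Sum>v\<in>C. card ({w. E v w} \<inter> insert x C)) = (\<Sum>v\<in>C. card ({w. E v w} \<inter> C)) + card ({w. E x w} \<inter> C)"
    using a b by (simp add: sum.distrib)
  finally show ?case using c insert(3) by simp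
qed

lemma exists_trout: assumes "U \<in> P0" "istri U" shows "\<exists>p q. trout U p q"
proof -
  obtain p where p: "p \<in> U" using P0_ne[OF assms(1)] by blast
  obtain q where "E p q" "q \<notin> U" using tri_out[OF assms(2) p] by blast
  then show ?thesis unfolding trout_def using assms p by blast
qed

lemma bridge_pair:
  assumes T: "istri T" and ab: "a \<in> T" "b \<in> T" "a \<noteq> b"
    and a': "E a a'" "a' \<notin> T" and b': "E b b'" "b' \<notin> T"
    and na: "a \<notin> R a a'" and nb: "b \<notin> R b b'"
    and pa: "p \<in> R a a'" and pb: "p \<in> R b b'"
  shows False
proof -
  have aR2: "a \<notin> R b b'"
  proof
    assume "a \<in> R b b'"
    moreover have "rem b b' a b" unfolding rem_def using tri_adj[OF T ab(1,2,3)] ab b' by auto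
    ultimately have "b \<in> R b b'" by (rule R_step)
    then show False using nb by blast
  qed
  have tr: "(rem a a')\<^sup>*\<^sup>* b' p"
  proof (rule rtranclp_transfer[where R="R b b'" and r="rem b b'"])
    show "(rem b b')\<^sup>*\<^sup>* b' p" using pb unfolding R_def by simp
    show "b' \<in> R b b'" by (rule R_start)
    fix u w assume u: "u \<in> R b b'" and r: "rem b b' u w"
    have w: "w \<in> R b b'" using R_step[OF u r] .
    have "E u w" using r unfolding rem_def by blast
    moreover have "u \<noteq> a" "w \<noteq> a" using u w aR2 by auto
    ultimately show "w \<in> R b b' \<and> rem a a' u w" using w unfolding rem_def by blast
  qed
  have pb': "(rem a a')\<^sup>*\<^sup>* p b'" using rtranclp_sym[OF rem_sym tr] .
  have r1: "rem a a' b' b" unfolding rem_def using b' ab a'(2) Esym by auto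
  have r2: "rem a a' b a" unfolding rem_def using tri_adj[OF T ab(2,1)] ab a'(2) by auto
  have "(rem a a')\<^sup>*\<^sup>* a' p" using pa unfolding R_def by simp
  then have "(rem a a')\<^sup>*\<^sup>* a' b'" using pb' by simp
  then have "(rem a a')\<^sup>*\<^sup>* a' a" using r1 r2 by (metis rtranclp.rtrancl_into_rtrancl)
  then show False using na unfolding R_def by simp
qed

lemma good_edge:
  assumes ex: "\<exists>U\<in>P0. istri U"
  shows "\<exists>U p q. trout U p q \<and> (rem p q)\<^sup>*\<^sup>* q p"
proof (rule ccontr)
  assume "\<not> ?thesis"
  then have Hb: "\<And>U p q. trout U p q \<Longrightarrow> p \<notin> R p q" unfolding R_def by blast
  obtain U0 where "U0 \<in> P0" "istri U0" using ex by blast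
  then obtain p0 q0 where "trout U0 p0 q0" using exists_trout by blast
  define n where "n = (LEAST n. \<exists>U p q. trout U p q \<and> card (R p q) = n)"
  have "\<exists>U p q. trout U p q \<and> card (R p q) = n"
    unfolding n_def by (rule LeastI_ex) (use \<open>trout U0 p0 q0\<close> in blast)
  then obtain U p q where tU: "trout U p q" and cn: "card (R p q) = n" by blast
  have minl: "n \<le> card (R p' q')" if "trout U' p' q'" for U' p' q'
    unfolding n_def by (rule Least_le) (use that in blast)
  have U: "U \<in> P0" "istri U" "p \<in> U" "E p q" "q \<notin> U" using tU unfolding trout_def by auto
  define C where "C = R p q"
  have pC: "p \<notin> C" using Hb[OF tU] C_def by simp
  have qC: "q \<in> C" unfolding C_def by (rule R_start)
  have CV: "C \<subseteq> V" unfolding C_def using R_sub U(4) by blast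
  have fC: "finite C" using CV finV finite_subset by blast
  have Ccl: "w \<in> C" if "v \<in> C" "E v w" "\<not> (v = q \<and> w = p)" for v w
  proof -
    have "v \<noteq> p" using that pC by blast
    then have "rem p q v w" unfolding rem_def using that by blast
    then show ?thesis using R_step that(1) unfolding C_def by blast
  qed
  have notqp: "\<not> (a = q \<and> b = p)" if X: "X \<in> P0" "a \<in> X" "b \<in> X" for X a b
  proof
    assume "a = q \<and> b = p"
    then have "X = U" using P0_disj[OF X(1) U(1)] X U(3) by blast
    then show False using \<open>a = q \<and> b = p\<close> X U(5) by blast
  qed
  have unitC: "X \<subseteq> C" if X: "X \<in> P0" and v: "v \<in> X" "v \<in> C" for X v
  proof
    fix w assume w: "w \<in> X"
    show "w \<in> C"
    proof (cases "w = v")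
      case True then show ?thesis using v by simp
    next
      case False
      from unit_conn[OF X v(1) w] False
      have "E v w \<or> (\<exists>h\<in>X. E v h \<and> E h w)" by metis
      then show ?thesis
      proof
        assume "E v w" then show ?thesis using Ccl[OF v(2)] notqp[OF X v(1) w] by blast
      next
        assume "\<exists>h\<in>X. E v h \<and> E h w"
        then obtain h where h: "h \<in> X" "E v h" "E h w" by blast
        have "h \<in> C" using Ccl[OF v(2) h(2)] notqp[OF X v(1) h(1)] by blast
        then show ?thesis using Ccl[OF _ h(3)] notqp[OF X h(1) w] by blast
      qed
    qed
  qed
  
  have deg: "card ({w. E v w} \<inter> C) = (if v = q then 2 else 3)" if v: "v \<in> C" for v
  proof (cases "v = q")
    case True
    have "{w. E v w} \<inter> C = {w. E v w} - {p}" using Ccl[OF v] pC True by blast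
    moreover have "p \<in> {w. E v w}" using True U(4) Esym by blast
    moreover have "card {w. E v w} = 3" using cardN v CV by blast
    ultimately show ?thesis using True finN by (simp add: card_Diff_singleton)
  next
    case False
    then have "{w. E v w} \<inter> C = {w. E v w}" using Ccl[OF v] by blast
    then show ?thesis using False cardN v CV by auto
  qed
  have sum3: "(\<Sum>v\<in>C. card ({w. E v w} \<inter> C)) + 1 = 3 * card C"
  proof -
    have "(\<Sum>v\<in>C. card ({w. E v w} \<inter> C)) = (\<Sum>v\<in>C. (if v = q then 2 else 3))"
      using deg by (rule sum.cong[OF refl])
    also have "\<dots> = 2 + (\<Sum>v\<in>C - {q}. 3)"
      using sum.remove[OF fC qC, of "\<lambda>v. if v = q then 2 else 3::nat"] by simp
    also have "\<dots> = 2 + 3 * (card C - 1)" using fC qC by (simp add: card_Diff_singleton)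
    finally have eq: "(\<Sum>v\<in>C. card ({w. E v w} \<inter> C)) = 2 + 3 * (card C - 1)" .
    have "card C \<noteq> 0" using fC qC by auto
    then obtain k where "card C = Suc k" using not0_implies_Suc by blast
    then show ?thesis using eq by simp
  qed
  have oddC: "odd (card C)"
  proof -
    have "even (\<Sum>v\<in>C. card ({w. E v w} \<inter> C))" using handshake[OF fC] .
    then obtain m where "(\<Sum>v\<in>C. card ({w. E v w} \<inter> C)) = 2 * m" by (rule evenE)
    then have "2 * m + 1 = 3 * card C" using sum3 by simp
    then show ?thesis by presburger
  qed
  
  have "\<exists>T\<in>P0. istri T \<and> T \<subseteq> C"
  proof (rule ccontr)
    assume nt: "\<not> ?thesis"
    define K where "K = {X\<in>P0. X \<subseteq> C}"
    have UK: "\<Union>K = C"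
    proof
      show "\<Union>K \<subseteq> C" unfolding K_def by blast
      show "C \<subseteq> \<Union>K"
      proof
        fix v assume v: "v \<in> C"
        then obtain X where "X \<in> P0" "v \<in> X" using unit_of CV by blast
        then show "v \<in> \<Union>K" unfolding K_def using unitC v by blast
      qed
    qed
    have pd: "pairwise disjnt K" unfolding pairwise_def disjnt_def K_def using P0_disj by blast
    have fK: "finite K" unfolding K_def using finP0 by simp
    have "card C = sum card K" using card_Union_disjoint[OF pd] P0_fin UK unfolding K_def by auto
    also have "\<dots> = sum (\<lambda>_. 4) K"
    proof (rule sum.cong[OF refl])
      fix X assume "X \<in> K"
      then have "X \<in> P0" "\<not> istri X" using nt unfolding K_def by auto
      then have "isdia X" using P0_cases by blast
      then show "card X = 4" by (rule isdia_card)
    qed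
    finally have "card C = 4 * card K" by simp
    then show False using oddC by simp
  qed
  then obtain T where T: "T \<in> P0" "istri T" "T \<subseteq> C" by blast
  obtain a b c where T3: "T = {a,b,c}" "tri E a b c" using T(2) unfolding istri_def by blast
  have ab: "a \<in> T" "b \<in> T" "a \<noteq> b" using T3 unfolding tri_def by auto
  obtain a' where a': "E a a'" "a' \<notin> T" using tri_out[OF T(2) ab(1)] by blast
  obtain b' where b': "E b b'" "b' \<notin> T" using tri_out[OF T(2) ab(2)] by blast
  have ta: "trout T a a'" and tb: "trout T b b'" unfolding trout_def using T ab a' b' by auto
  have shrink: False if tx: "trout T x x'" and px: "p \<notin> R x x'" for x x'
  proof -
    have x: "x \<in> T" "E x x'" "x' \<notin> T" using tx unfolding trout_def by auto
    have nx: "x \<notin> R x x'" using Hb[OF tx] .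
    have xC: "x \<in> C" using x T(3) by blast
    have x'C: "x' \<in> C"
    proof (cases "x = q \<and> x' = p")
      case True
      then have "p \<in> R x x'" using R_start by metis
      then show ?thesis using px by blast
    next
      case False then show ?thesis using Ccl[OF xC x(2)] by blast
    qed
    have sub: "R x x' \<subseteq> C"
    proof
      fix v assume v: "v \<in> R x x'"
      have "(rem p q)\<^sup>*\<^sup>* x' v"
      proof (rule rtranclp_transfer[where R="R x x'" and r="rem x x'"])
        show "(rem x x')\<^sup>*\<^sup>* x' v" using v unfolding R_def by simp
        show "x' \<in> R x x'" by (rule R_start)
        fix u w assume u: "u \<in> R x x'" and r: "rem x x' u w"
        have w: "w \<in> R x x'" using R_step[OF u r] .
        have "E u w" using r unfolding rem_def by blast
        moreover have "u \<noteq> p" "w \<noteq> p" using u w px by auto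
        ultimately show "w \<in> R x x' \<and> rem p q u w" using w unfolding rem_def by blast
      qed
      moreover have "(rem p q)\<^sup>*\<^sup>* q x'" using x'C unfolding C_def R_def by simp
      ultimately have "(rem p q)\<^sup>*\<^sup>* q v" by simp
      then show "v \<in> C" unfolding C_def R_def by simp
    qed
    then have "R x x' \<subset> C" using xC nx by blast
    then have "card (R x x') < card C" using fC psubset_card_mono by blast
    moreover have "n \<le> card (R x x')" using minl[OF tx] .
    ultimately show False using cn C_def by simp
  qed
  show False
  proof (cases "p \<in> R a a'")
    case True
    have "p \<notin> R b b'"
      using bridge_pair[OF T(2) ab a' b' Hb[OF ta] Hb[OF tb] True] by blast
    then show False using shrink[OF tb] by blast
  next
    case False
    then show False using shrink[OF ta] by blast
  qed
qed

end


context cg begin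

lemma card_V_dia: assumes all: "\<forall>X\<in>P0. isdia X" shows "card V = 4 * card P0"
proof -
  have pd: "pairwise disjnt P0" unfolding pairwise_def disjnt_def using P0_disj by blast
  have "card V = sum card P0" using card_Union_disjoint[OF pd] P0_fin P0_cover by metis
  also have "\<dots> = sum (\<lambda>_. 4) P0" using all isdia_card by (intro sum.cong) auto
  finally show ?thesis by simp
qed

lemma lb_dia: assumes all: "\<forall>X\<in>P0. isdia X" and ne: "V \<noteq> {}" and p: "percolating V E 2 S"
  shows "card P0 + 1 \<le> card S"
  using perc_lower_count[OF p ne] card_V_dia[OF all] by linarith

lemma ub_dia: assumes all: "\<forall>X\<in>P0. isdia X" and ne: "V \<noteq> {}"
  shows "\<exists>S. percolating V E 2 S \<and> card S \<le> card P0 + 1"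
proof -
  obtain v0 where v0: "v0 \<in> V" using ne by blast
  obtain W where W: "W \<in> P0" "v0 \<in> W" using unit_of[OF v0] by blast
  define s where "s X = (SOME h. h \<in> X \<and> (\<forall>w\<in>X. w \<noteq> h \<longrightarrow> E h w))" for X
  have s_dia: "s X \<in> X \<and> (\<forall>w\<in>X. w \<noteq> s X \<longrightarrow> E (s X) w)" if X: "X \<in> P0" for X
  proof -
    obtain h where "h \<in> X" "\<forall>w\<in>X. w \<noteq> h \<longrightarrow> E h w" using hub_ex all X by blast
    then show ?thesis unfolding s_def by (rule someI[where x=h, OF conjI])
  qed
  obtain q where q: "q \<in> W" "q \<noteq> s W"
  proof -
    have "card W = 4" using isdia_card all W(1) by blast
    then have "card (W - {s W}) = 3" using s_dia[OF W(1)] by (simp add: card_Diff_singleton)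
    then have "W - {s W} \<noteq> {}" by (metis card.empty zero_neq_numeral)
    then show ?thesis using that by blast
  qed
  have qV: "q \<in> V" using q(1) P0_sub W(1) by blast
  define S where "S = insert q (s ` P0)"
  have SV: "S \<subseteq> V" unfolding S_def using s_dia P0_sub qV by blast
  have cardS: "card S \<le> card P0 + 1"
  proof -
    have "finite (s ` P0)" using finP0 by simp
    then have "card S \<le> Suc (card (s ` P0))" unfolding S_def by (simp add: card_insert_if)
    moreover have "card (s ` P0) \<le> card P0" using finP0 card_image_le by blast
    ultimately show ?thesis by simp
  qed
  have inS: "inf S (s X)" if "X \<in> P0" for X unfolding S_def using that by (auto intro: infected.init)
  have iq: "inf S q" unfolding S_def by (auto intro: infected.init)
  have Winf: "\<And>z. z \<in> W \<Longrightarrow> inf S z"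
    using closed2[OF W(1) q(1) _ q(2) iq inS[OF W(1)]] s_dia[OF W(1)] by blast
  have reach: "E\<^sup>*\<^sup>* q v" if "v \<in> V" for v using conn qV that unfolding graph_connected_def by blast
  define r where "r X = (SOME x. x \<in> X \<and> (E ^^ dX E q X) q x)" for X
  have r: "r X \<in> X \<and> (E ^^ dX E q X) q (r X)" if X: "X \<in> P0" for X
  proof -
    obtain v where v: "v \<in> X" using P0_ne[OF X] by blast
    then have "v \<in> V" using P0_sub X by blast
    then obtain x where "x \<in> X" "(E ^^ dX E q X) q x" using dX_ex[OF v reach] by blast
    then show ?thesis unfolding r_def by (rule someI[where x=x, OF conjI])
  qed
  have cond: "\<exists>x\<in>X. (E ^^ dX E q X) q x \<and>
        ((\<exists>v. v \<notin> X \<and> E v x) \<longrightarrow> (\<exists>y\<in>X. y \<noteq> x \<and> E x y \<and> inf S y))"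
    if X: "X \<in> P0" "X \<noteq> W" for X
  proof -
    have rx: "r X \<in> X" "(E ^^ dX E q X) q (r X)" using r[OF X(1)] by auto
    have h: "s X \<in> X" "\<forall>w\<in>X. w \<noteq> s X \<longrightarrow> E (s X) w" using s_dia[OF X(1)] by auto
    have "(\<exists>v. v \<notin> X \<and> E v (r X)) \<longrightarrow> (\<exists>y\<in>X. y \<noteq> r X \<and> E (r X) y \<and> inf S y)"
    proof
      assume "\<exists>v. v \<notin> X \<and> E v (r X)"
      then obtain v where v: "v \<notin> X" "E v (r X)" by blast
      have ne: "r X \<noteq> s X"
      proof
        assume "r X = s X"
        then have "v \<in> X" using hub_nb[OF _ h(1) h(2)] all X(1) v(2) Esym by metis
        then show False using v(1) by blast
      qed
      then have "E (s X) (r X)" using h rx(1) by auto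
      then show "\<exists>y\<in>X. y \<noteq> r X \<and> E (r X) y \<and> inf S y" using h(1) ne inS[OF X(1)] Esym by metis
    qed
    then show ?thesis using rx by blast
  qed
  have all_inf: "\<forall>X\<in>P0. \<forall>z\<in>X. inf S z"
    using spread[of E q W S, OF _ reach W(1) q(1) Winf cond] by blast
  have "percolating V E 2 S" unfolding percolating_def using SV all_inf unit_of by blast
  then show ?thesis using cardS by blast
qed

end



lemma mod_suc_ne: "i < k \<Longrightarrow> 2 \<le> (k::nat) \<Longrightarrow> (i + 1) mod k \<noteq> i"
proof (cases "i + 1 < k")
  case True then show ?thesis by simp
next
  case False
  assume "i < k" "2 \<le> k"
  then have "i + 1 = k" using False by simp
  then show ?thesis using \<open>2 \<le> k\<close> by simp
qed

lemma neck_in: "(i, j) \<in> necklace_V k \<longleftrightarrow> i < k \<and> j < 4" unfolding necklace_V_def by simp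

lemma neck_dia:
  assumes k: "2 \<le> k" and i: "i < k"
  shows "\<not> necklace_E k (i,0) (i,1) \<and> necklace_E k (i,0) (i,2) \<and> necklace_E k (i,0) (i,3)
       \<and> necklace_E k (i,1) (i,2) \<and> necklace_E k (i,1) (i,3) \<and> necklace_E k (i,2) (i,3)"
proof -
  have ne: "(i + 1) mod k \<noteq> i" using mod_suc_ne[OF i k] .
  have m: "(i,j) \<in> necklace_V k" if "j < 4" for j using i that by (simp add: neck_in)
  have e: "necklace_E k (i,a) (i,b)" if "a < 4" "b < 4" "a \<noteq> b" "{a,b} \<noteq> {0,1}" for a b
    unfolding necklace_E_def using m that by simp
  have n: "\<not> necklace_E k (i,0) (i,1)" unfolding necklace_E_def using ne by auto
  show ?thesis using n e[of 0 2] e[of 0 3] e[of 1 2] e[of 1 3] e[of 2 3] by (simp add: doubleton_eq_iff)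
qed

context cg begin

lemma neck_all_dia:
  assumes N: "is_diamond_necklace V E"
  shows "(\<forall>X\<in>P0. isdia X) \<and> V \<noteq> {}"
proof -
  obtain k where k: "2 \<le> k" and iso: "graph_iso V E (necklace_V k) (necklace_E k)"
    using N unfolding is_diamond_necklace_def by blast
  obtain f where bf: "bij_betw f V (necklace_V k)"
    and ef: "\<forall>x\<in>V. \<forall>y\<in>V. E x y \<longleftrightarrow> necklace_E k (f x) (f y)"
    using iso unfolding graph_iso_def by blast
  define g where "g = inv_into V f"
  have bg: "bij_betw g (necklace_V k) V" unfolding g_def using bf by (rule bij_betw_inv_into)
  have fg: "f (g p) = p" if "p \<in> necklace_V k" for p
    unfolding g_def using bf that by (simp add: bij_betw_inv_into_right)
  have gV: "g p \<in> V" if "p \<in> necklace_V k" for p using bg that bij_betwE by blast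
  have eg: "E (g p) (g q) \<longleftrightarrow> necklace_E k p q" if "p \<in> necklace_V k" "q \<in> necklace_V k" for p q
    using ef gV[OF that(1)] gV[OF that(2)] fg that by metis
  have ginj: "inj_on g (necklace_V k)" using bg bij_betw_def by blast
  define D where "D i = {(i,0::nat),(i,1),(i,2),(i,3)}" for i :: nat
  define Q where "Q = (\<lambda>i. g ` D i) ` {..<k}"
  have DN: "D i \<subseteq> necklace_V k" if "i < k" for i unfolding D_def necklace_V_def using that by auto
  have Qdia: "isdia (g ` D i)" if i: "i < k" for i
  proof -
    have m: "(i,0) \<in> necklace_V k" "(i,1) \<in> necklace_V k" "(i,2) \<in> necklace_V k" "(i,3) \<in> necklace_V k"
      using i unfolding necklace_V_def by auto
    have d: "dia E (g (i,0)) (g (i,1)) (g (i,2)) (g (i,3))"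
      unfolding dia_def using neck_dia[OF k i] eg[OF m(1) m(2)] eg[OF m(1) m(3)] eg[OF m(1) m(4)]
        eg[OF m(2) m(3)] eg[OF m(2) m(4)] eg[OF m(3) m(4)]
        inj_onD[OF ginj _ m(1) m(2)] inj_onD[OF ginj _ m(1) m(3)] inj_onD[OF ginj _ m(1) m(4)]
        inj_onD[OF ginj _ m(2) m(3)] inj_onD[OF ginj _ m(2) m(4)] inj_onD[OF ginj _ m(3) m(4)]
      by auto
    have "g ` D i = {g (i,0), g (i,1), g (i,2), g (i,3)}" unfolding D_def by simp
    then show ?thesis unfolding isdia_def using d by blast
  qed
  have cov: "\<Union>Q = V"
  proof -
    have "\<Union>(D ` {..<k}) = necklace_V k"
    proof
      show "\<Union>(D ` {..<k}) \<subseteq> necklace_V k" using DN by blast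
      show "necklace_V k \<subseteq> \<Union>(D ` {..<k})"
      proof
        fix p assume "p \<in> necklace_V k"
        then obtain i j where p: "p = (i,j)" "i < k" "j < 4" unfolding necklace_V_def by blast
        then have "j = 0 \<or> j = 1 \<or> j = 2 \<or> j = 3" by auto
        then have "p \<in> D i" unfolding D_def using p by auto
        then show "p \<in> \<Union>(D ` {..<k})" using p by blast
      qed
    qed
    then have "g ` (\<Union>(D ` {..<k})) = V" using bg bij_betw_imp_surj_on by metis
    then show ?thesis unfolding Q_def by blast
  qed
  have dis: "A \<inter> B = {}" if AB: "A \<in> Q" "B \<in> Q" "A \<noteq> B" for A B
  proof -
    obtain i j where ij: "i < k" "j < k" "A = g ` D i" "B = g ` D j" using AB(1,2) unfolding Q_def by blast
    then have "i \<noteq> j" using AB(3) by blast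
    then have "D i \<inter> D j = {}" unfolding D_def by auto
    then have "g ` D i \<inter> g ` D j = {}"
      using inj_on_image_Int[OF ginj DN[OF ij(1)] DN[OF ij(2)]] by simp
    then show ?thesis using ij by simp
  qed
  have up: "unit_partition V E Q"
    unfolding unit_partition_def
  proof (intro conjI ballI impI)
    show "\<Union>Q = V" by (rule cov)
    show "\<And>A B. A \<in> Q \<Longrightarrow> B \<in> Q \<Longrightarrow> A \<noteq> B \<Longrightarrow> A \<inter> B = {}" using dis by blast
    fix A assume "A \<in> Q"
    then obtain i where "i < k" "A = g ` D i" unfolding Q_def by blast
    then have "isdia A" using Qdia by blast
    then show "induces_triangle E A \<or> induces_diamond E A" unfolding isdia_def induces_diamond_iff by blast
  qed
  then have "Q = P0" by (rule partition_unique)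
  moreover have "\<forall>X\<in>Q. isdia X" unfolding Q_def using Qdia by blast
  moreover have "V \<noteq> {}"
  proof -
    have "(0,0) \<in> necklace_V k" using k unfolding necklace_V_def by auto
    then show ?thesis using gV by blast
  qed
  ultimately show ?thesis by blast
qed

end



locale cgd = cg +
  assumes alld: "\<forall>X\<in>P0. isdia X" and Vne: "V \<noteq> {}"
begin

definition uo :: "'a \<Rightarrow> 'a set" where "uo v = (THE X. X \<in> P0 \<and> v \<in> X)"

lemma uo_eq: assumes "X \<in> P0" "v \<in> X" shows "uo v = X"
  unfolding uo_def
proof (rule the_equality)
  show "X \<in> P0 \<and> v \<in> X" using assms by blast
  fix Y assume "Y \<in> P0 \<and> v \<in> Y"
  then show "Y = X" using P0_disj assms by blast
qed

lemma uo_prop: assumes "v \<in> V" shows "uo v \<in> P0 \<and> v \<in> uo v"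
proof -
  obtain X where "X \<in> P0" "v \<in> X" using unit_of[OF assms] by blast
  then show ?thesis using uo_eq by simp
qed

definition isend :: "'a \<Rightarrow> bool" where "isend x \<longleftrightarrow> x \<in> V \<and> (\<exists>w. E x w \<and> w \<notin> uo x)"
definition sg :: "'a \<Rightarrow> 'a" where "sg x = (SOME w. E x w \<and> w \<notin> uo x)"
definition ta :: "'a \<Rightarrow> 'a" where "ta x = (SOME y. y \<in> uo x \<and> y \<noteq> x \<and> isend y)"

lemma ends_of:
  assumes X: "X \<in> P0" "X = {a,b,c,d}" and D: "dia E a b c d"
  shows "isend a" "isend b" "\<not> isend c" "\<not> isend d"
proof -
  have u: "uo v = X" if "v \<in> X" for v using uo_eq[OF X(1) that] .
  have dd: "a \<noteq> b" "a \<noteq> c" "a \<noteq> d" "b \<noteq> c" "b \<noteq> d" "c \<noteq> d" "\<not> E a b" "E a c" "E a d" "E b c" "E b d" "E c d"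
    using D unfolding dia_def by auto
  have endab: "isend a" if D': "dia E a b c d" and X': "X = {a,b,c,d}" for a b c d
  proof -
    have dd: "a \<noteq> b" "c \<noteq> d" "\<not> E a b" "E a c" "E a d" "a \<noteq> c" "a \<noteq> d" using D' unfolding dia_def by auto
    obtain w where w: "E a w" "w \<noteq> c" "w \<noteq> d" using third[OF dd(4) dd(5) dd(2)] by blast
    have "w \<noteq> a" using w(1) Ene by blast
    moreover have "w \<noteq> b" using w(1) dd(3) by blast
    ultimately have "w \<notin> X" using w X' by blast
    moreover have "uo a = X" using uo_eq[OF X(1)] X' by simp
    moreover have "a \<in> V" using w(1) EV1 by blast
    ultimately show ?thesis unfolding isend_def using w(1) by blast
  qed
  show "isend a" using endab[OF D X(2)] .
  show "isend b" using endab[OF dia_swap1[OF D]] X(2) by (simp add: insert_commute)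
  have midc: "\<not> isend c" if D': "dia E a b c d" and X': "X = {a,b,c,d}" for a b c d
  proof
    assume "isend c"
    then obtain w where w: "E c w" "w \<notin> uo c" unfolding isend_def by blast
    have "uo c = X" using uo_eq[OF X(1)] X' by simp
    moreover have "w = a \<or> w = b \<or> w = d" using mid_nb[OF D' w(1)] .
    ultimately show False using w(2) X' by blast
  qed
  show "\<not> isend c" using midc[OF D X(2)] .
  show "\<not> isend d" using midc[OF dia_swap2[OF D]] X(2) by (simp add: insert_commute)
qed

lemma end_shape:
  assumes x: "isend x"
  shows "\<exists>c d. uo x = {x, ta x, c, d} \<and> dia E x (ta x) c d \<and> isend (ta x) \<and>
     (\<forall>v. v \<in> uo x \<and> isend v \<longrightarrow> v = x \<or> v = ta x)"
proof -
  have xV: "x \<in> V" using x unfolding isend_def by blast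
  have X: "uo x \<in> P0" "x \<in> uo x" using uo_prop[OF xV] by auto
  have "isdia (uo x)" using alld X(1) by blast
  then obtain a b c d where Xe: "uo x = {a,b,c,d}" and D: "dia E a b c d"
    unfolding isdia_def by blast
  have gen: "\<exists>c d. uo x = {x, ta x, c, d} \<and> dia E x (ta x) c d \<and> isend (ta x) \<and>
     (\<forall>v. v \<in> uo x \<and> isend v \<longrightarrow> v = x \<or> v = ta x)"
    if D': "dia E x y c d" and Xe': "uo x = {x,y,c,d}" for y c d
  proof -
    have e: "isend x" "isend y" "\<not> isend c" "\<not> isend d" using ends_of[OF X(1) Xe' D'] by auto
    have dd: "x \<noteq> y" using D' unfolding dia_def by auto
    have only: "v = x \<or> v = y" if "v \<in> uo x" "isend v" for v using that e Xe' by blast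
    have "y \<in> uo x \<and> y \<noteq> x \<and> isend y" using Xe' dd e by auto
    then have t: "ta x \<in> uo x \<and> ta x \<noteq> x \<and> isend (ta x)" unfolding ta_def by (rule someI)
    then have "ta x = y" using only by blast
    then show ?thesis using D' Xe' e only by blast
  qed
  have "x = a \<or> x = b" using ends_of[OF X(1) Xe D] X(2) Xe x by blast
  then show ?thesis
  proof
    assume xa: "x = a"
    have d1: "dia E x b c d" using D xa by simp
    have d2: "uo x = {x,b,c,d}" using Xe xa by simp
    show ?thesis using gen[OF d1 d2] .
  next
    assume xb: "x = b"
    have d1: "dia E x a c d" using dia_swap1[OF D] xb by simp
    have d2: "uo x = {x,a,c,d}" using Xe xb by blast
    show ?thesis using gen[OF d1 d2] .
  qed
qed

lemma end_facts:
  assumes x: "isend x"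
  shows "E x (sg x)" "sg x \<notin> uo x" "ta x \<in> uo x" "ta x \<noteq> x" "isend (ta x)" "\<not> E x (ta x)"
    "uo (ta x) = uo x" "\<And>v. v \<in> uo x \<Longrightarrow> isend v \<Longrightarrow> v = x \<or> v = ta x"
    "\<And>w. E x w \<Longrightarrow> w \<notin> uo x \<Longrightarrow> w = sg x" "x \<in> uo x" "x \<in> V" "uo x \<in> P0"
proof -
  have xV: "x \<in> V" using x unfolding isend_def by blast
  then show "x \<in> V" .
  have X: "uo x \<in> P0" "x \<in> uo x" using uo_prop[OF xV] by auto
  then show "x \<in> uo x" "uo x \<in> P0" by auto
  have "\<exists>w. E x w \<and> w \<notin> uo x" using x unfolding isend_def by blast
  then have s: "E x (sg x) \<and> sg x \<notin> uo x" unfolding sg_def by (rule someI_ex)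
  then show "E x (sg x)" "sg x \<notin> uo x" by auto
  obtain c d where sh: "uo x = {x, ta x, c, d}" "dia E x (ta x) c d" "isend (ta x)"
    "\<forall>v. v \<in> uo x \<and> isend v \<longrightarrow> v = x \<or> v = ta x" using end_shape[OF x] by blast
  show "ta x \<in> uo x" using sh(1) by blast
  show "ta x \<noteq> x" "\<not> E x (ta x)" using sh(2) unfolding dia_def by auto
  show "isend (ta x)" using sh(3) .
  show "uo (ta x) = uo x" using uo_eq[OF X(1)] sh(1) by simp
  show "\<And>v. v \<in> uo x \<Longrightarrow> isend v \<Longrightarrow> v = x \<or> v = ta x" using sh(4) by blast
  show "\<And>w. E x w \<Longrightarrow> w \<notin> uo x \<Longrightarrow> w = sg x" using out_unique[OF X(1) X(2)] s by blast
qed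

lemma sg_facts:
  assumes x: "isend x"
  shows "isend (sg x)" "sg (sg x) = x" "uo (sg x) \<noteq> uo x"
proof -
  have s: "E x (sg x)" "sg x \<notin> uo x" and X: "x \<in> uo x" "uo x \<in> P0"
    using end_facts(1)[OF x] end_facts(2)[OF x] end_facts(10)[OF x] end_facts(12)[OF x] by auto
  have sV: "sg x \<in> V" using s(1) EV2 by blast
  have Y: "uo (sg x) \<in> P0" "sg x \<in> uo (sg x)" using uo_prop[OF sV] by auto
  show ne: "uo (sg x) \<noteq> uo x" using Y(2) s(2) by blast
  have xn: "x \<notin> uo (sg x)"
  proof
    assume "x \<in> uo (sg x)"
    then have "uo (sg x) = uo x" using P0_disj[OF Y(1) X(2)] X(1) by blast
    then show False using ne by blast
  qed
  have e: "E (sg x) x" using Esym[OF s(1)] .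
  show se: "isend (sg x)" unfolding isend_def using sV e xn by blast
  show "sg (sg x) = x" using end_facts(9)[OF se e xn] by simp
qed

lemma ta_ta: assumes x: "isend x" shows "ta (ta x) = x"
proof -
  have t: "isend (ta x)" "uo (ta x) = uo x" "ta x \<noteq> x" using end_facts(5)[OF x] end_facts(7)[OF x] end_facts(4)[OF x] by auto
  have "x \<in> uo (ta x)" using t(2) end_facts(10)[OF x] by simp
  then have "x = ta x \<or> x = ta (ta x)" using end_facts(8)[OF t(1)] x by blast
  then show ?thesis using t(3) by metis
qed

end



lemma mod_Suc_cancel: "0 < (L::nat) \<Longrightarrow> Suc x mod L = Suc y mod L \<Longrightarrow> x mod L = y mod L"
  by (auto simp: mod_Suc split: if_splits)

lemma mod_add_cancel: "0 < (L::nat) \<Longrightarrow> (x + t) mod L = (y + t) mod L \<Longrightarrow> x mod L = y mod L"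
proof (induction t)
  case (Suc t) then show ?case using mod_Suc_cancel[of L "x + t" "y + t"] by simp
qed simp

context cgd begin

definition ff :: "'a \<Rightarrow> 'a" where "ff x = ta (sg x)"

lemma ff_end: "isend x \<Longrightarrow> isend (ff x)"
  unfolding ff_def using sg_facts(1) end_facts(5) by blast

lemma ff_inj: assumes "isend x" "isend y" "ff x = ff y" shows "x = y"
proof -
  have "ta (ta (sg x)) = ta (ta (sg y))" using assms(3) unfolding ff_def by simp
  then have "sg x = sg y" using ta_ta sg_facts(1) assms(1,2) by metis
  then have "sg (sg x) = sg (sg y)" by simp
  then show ?thesis using sg_facts(2) assms(1,2) by metis
qed

lemma funpow_end: "isend x \<Longrightarrow> isend ((ff ^^ n) x)"
  by (induction n) (auto intro: ff_end)

lemma funpow_cancel: "isend x \<Longrightarrow> isend y \<Longrightarrow> (ff ^^ n) x = (ff ^^ n) y \<Longrightarrow> x = y"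
proof (induction n)
  case (Suc n)
  then have "(ff ^^ n) x = (ff ^^ n) y" using ff_inj funpow_end by (metis funpow.simps(2) o_apply)
  then show ?case using Suc by blast
qed simp

lemma end_exists: "\<exists>x. isend x"
proof -
  obtain v where v: "v \<in> V" using Vne by blast
  obtain X where X: "X \<in> P0" "v \<in> X" using unit_of[OF v] by blast
  have "isdia X" using alld X(1) by blast
  then obtain a b c d where ab: "X = {a,b,c,d}" "dia E a b c d" unfolding isdia_def by blast
  have "isend a" using ends_of(1)[OF X(1) ab(1) ab(2)] .
  then show ?thesis by blast
qed

definition a0 :: 'a where "a0 = (SOME x. isend x)"
lemma a0_end: "isend a0" unfolding a0_def using end_exists by (rule someI_ex)

definition av :: "nat \<Rightarrow> 'a" where "av i = (ff ^^ i) a0"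
definition bv :: "nat \<Rightarrow> 'a" where "bv i = ta (av i)"

lemma av_end: "isend (av i)" unfolding av_def using funpow_end a0_end by blast
lemma av_Suc: "av (Suc i) = ff (av i)" unfolding av_def by simp

lemma finZ: "finite {x. isend x}"
  using finV finite_subset[of "{x. isend x}" V] unfolding isend_def by blast

lemma period_ex: "\<exists>n>0. av n = a0"
proof -
  let ?A = "{0..card {x. isend x}}"
  have "av ` ?A \<subseteq> {x. isend x}" using av_end by blast
  then have "card (av ` ?A) \<le> card {x. isend x}" using finZ card_mono by blast
  then have "card (av ` ?A) < card ?A" by simp
  then have "\<not> inj_on av ?A" by (rule pigeonhole)
  then obtain i j where ij: "i \<in> ?A" "j \<in> ?A" "i \<noteq> j" "av i = av j" unfolding inj_on_def by blast
  have gen: "\<exists>n>0. av n = a0" if "i < j" "av i = av j" for i j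
  proof -
    have "av j = (ff ^^ i) ((ff ^^ (j - i)) a0)" unfolding av_def using that(1)
      by (metis funpow_add le_add_diff_inverse less_imp_le o_apply)
    then have "(ff ^^ i) a0 = (ff ^^ i) (av (j - i))" using that(2) unfolding av_def by simp
    then have "a0 = av (j - i)" using funpow_cancel a0_end av_end by blast
    then show ?thesis using that(1) by (intro exI[of _ "j - i"]) simp
  qed
  show ?thesis
  proof (cases "i < j")
    case True then show ?thesis using gen ij by blast
  next
    case False then have "j < i" using ij(3) by simp
    then show ?thesis using gen ij(4) by metis
  qed
qed

definition L :: nat where "L = (LEAST n. 0 < n \<and> av n = a0)"

lemma L_prop: "0 < L" "av L = a0"
proof -
  have "0 < L \<and> av L = a0" unfolding L_def using period_ex by (rule LeastI_ex)
  then show "0 < L" "av L = a0" by auto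
qed

lemma L_min: "0 < n \<Longrightarrow> av n = a0 \<Longrightarrow> L \<le> n" unfolding L_def by (rule Least_le) blast

lemma av_addL: "av (n + L) = av n"
proof -
  have "av (n + L) = (ff ^^ n) (av L)" unfolding av_def by (simp add: funpow_add)
  then show ?thesis using L_prop(2) unfolding av_def by simp
qed

lemma av_mod: "av n = av (n mod L)"
proof -
  have "av (r + L * k) = av r" for r k
  proof (induction k)
    case (Suc k)
    have "r + L * Suc k = (r + L * k) + L" by simp
    then have "av (r + L * Suc k) = av (r + L * k)" using av_addL by metis
    then show ?case using Suc by simp
  qed simp
  then show ?thesis by (metis mod_mult_div_eq)
qed

lemma av_modeq: "m mod L = n mod L \<Longrightarrow> av m = av n" using av_mod by metis
lemma bv_modeq: "m mod L = n mod L \<Longrightarrow> bv m = bv n" unfolding bv_def using av_modeq by metis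

lemma av_inj: assumes "i < L" "j < L" "av i = av j" shows "i = j"
proof (rule ccontr)
  assume ne: "i \<noteq> j"
  have gen: False if "i < j" "j < L" "av i = av j" for i j
  proof -
    have "av j = (ff ^^ i) ((ff ^^ (j - i)) a0)" unfolding av_def using that(1)
      by (metis funpow_add le_add_diff_inverse less_imp_le o_apply)
    then have "(ff ^^ i) a0 = (ff ^^ i) (av (j - i))" using that(3) unfolding av_def by simp
    then have "a0 = av (j - i)" using funpow_cancel a0_end av_end by blast
    then have "L \<le> j - i" using L_min that(1) by simp
    then show False using that by simp
  qed
  show False
  proof (cases "i < j")
    case True then show False using gen assms by blast
  next
    case False then have "j < i" using ne by simp
    then show False using gen assms by metis
  qed
qed

lemma bv_Suc: "bv (Suc i) = sg (av i)"
  unfolding bv_def av_Suc ff_def using ta_ta sg_facts(1) av_end by blast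

lemma sg_bv: "sg (bv (Suc i)) = av i"
  using bv_Suc sg_facts(2) av_end by metis

lemma units_distinct: assumes ij: "i < j" "j < L" shows "uo (av i) \<noteq> uo (av j)"
proof
  assume eq: "uo (av i) = uo (av j)"
  have "av i \<noteq> av j"
  proof
    assume "av i = av j"
    then have "i = j" using av_inj[of i j] ij by simp
    then show False using ij by simp
  qed
  moreover have "av j \<in> uo (av i)" using eq end_facts(10)[OF av_end] by simp
  ultimately have ajb: "av j = bv i" using end_facts(8)[OF av_end[of i] _ av_end[of j]] unfolding bv_def by metis
  have L0: "0 < L" using L_prop(1) .
  have inv: "\<exists>n. av (j + t) = bv n \<and> (n + t) mod L = i mod L" for t
  proof (induction t)
    case 0 show ?case using ajb by auto
  next
    case (Suc t)
    then obtain n where n: "av (j + t) = bv n" "(n + t) mod L = i mod L" by blast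
    define n' where "n' = n + L - 1"
    have s: "Suc n' = n + L" unfolding n'_def using L0 by simp
    have "bv n = bv (Suc n')" using bv_modeq[of n "Suc n'"] s by simp
    then have "sg (bv n) = av n'" using sg_bv by simp
    then have "av (j + Suc t) = bv n'" using n(1) unfolding bv_def by (simp add: av_Suc ff_def)
    moreover have "(n' + Suc t) mod L = i mod L"
    proof -
      have e: "n' + Suc t = (n + t) + L" using s by simp
      have "(n' + Suc t) mod L = ((n + t) + L) mod L" by (subst e) (rule refl)
      also have "\<dots> = (n + t) mod L" by simp
      finally show ?thesis using n(2) by simp
    qed
    ultimately show ?case by blast
  qed
  define t where "t = (i + L - j) div 2"
  have ne2: "av m \<noteq> bv m" for m unfolding bv_def using end_facts(4)[OF av_end] by metis
  have ne3: "av m \<noteq> bv (Suc m)" for m using bv_Suc end_facts(2)[OF av_end] end_facts(10)[OF av_end] by metis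
  obtain n where n: "av (j + t) = bv n" "(n + t) mod L = i mod L" using inv by blast
  show False
  proof (cases "even (i + L - j)")
    case True
    then obtain m where m: "i + L - j = 2 * m" by (rule evenE)
    then have "t = m" unfolding t_def by simp
    then have "j + t + t = i + L" using m ij by simp
    then have "((j + t) + t) mod L = i mod L" by simp
    then have "(n + t) mod L = ((j + t) + t) mod L" using n(2) by simp
    then have "n mod L = (j + t) mod L" using mod_add_cancel L0 by blast
    then have "bv n = bv (j + t)" using bv_modeq by blast
    then show False using n(1) ne2 by metis
  next
    case False
    then obtain m where m: "i + L - j = 2 * m + 1" by (rule oddE)
    then have "t = m" unfolding t_def by simp
    then have "j + t + 1 + t = i + L" using m ij by simp
    then have "((Suc (j + t)) + t) mod L = i mod L" by simp
    then have "(n + t) mod L = (Suc (j + t) + t) mod L" using n(2) by simp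
    then have "n mod L = Suc (j + t) mod L" using mod_add_cancel L0 by blast
    then have "bv n = bv (Suc (j + t))" using bv_modeq by blast
    then show False using n(1) ne3 by metis
  qed
qed

end


context cgd begin

lemma bv_in: "bv i \<in> uo (av i)" unfolding bv_def using end_facts(3)[OF av_end] .
lemma av_in: "av i \<in> uo (av i)" using end_facts(10)[OF av_end] .
lemma uo_av_P0: "uo (av i) \<in> P0" using end_facts(12)[OF av_end] .
lemma L0: "0 < L" using L_prop(1) .

lemma uo_av_mod: "uo (av i) = uo (av (i mod L))" using av_mod by metis

lemma units_eq_idx: assumes "i < L" "i' < L" "uo (av i) = uo (av i')" shows "i = i'"
proof (rule ccontr)
  assume "i \<noteq> i'"
  then have "i < i' \<or> i' < i" by arith
  then show False using units_distinct assms by metis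
qed

lemma meet_idx: assumes "i < L" "i' < L" "v \<in> uo (av i)" "v \<in> uo (av i')" shows "i = i'"
proof -
  have "uo (av i) = uo (av i')" using P0_disj[OF uo_av_P0 uo_av_P0] assms(3,4) by blast
  then show ?thesis using units_eq_idx assms(1,2) by blast
qed

lemma coverage: "V \<subseteq> (\<Union>i<L. uo (av i))"
proof -
  let ?C = "\<Union>i<L. uo (av i)"
  have modin: "uo (av n) \<subseteq> ?C" for n
  proof -
    have "n mod L < L" using L0 by simp
    then show ?thesis using uo_av_mod[of n] by blast
  qed
  have cl: "w \<in> ?C" if v: "v \<in> ?C" and e: "E v w" for v w
  proof -
    obtain i where i: "i < L" "v \<in> uo (av i)" using v by blast
    show ?thesis
    proof (cases "w \<in> uo (av i)")
      case True then show ?thesis using i by blast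
    next
      case False
      have uv: "uo v = uo (av i)" using uo_eq[OF uo_av_P0 i(2)] .
      have ve: "isend v" unfolding isend_def using e EV1 False uv by auto
      have ws: "w = sg v" using end_facts(9)[OF ve e] False uv by simp
      have "v = av i \<or> v = ta (av i)" using end_facts(8)[OF av_end i(2) ve] .
      then show ?thesis
      proof
        assume "v = av i"
        then have "w = bv (Suc i)" using ws bv_Suc by simp
        then show ?thesis using bv_in modin by blast
      next
        assume "v = ta (av i)"
        then have vb: "v = bv i" unfolding bv_def .
        define n' where "n' = i + L - 1"
        have "Suc n' = i + L" unfolding n'_def using L0 by simp
        then have "i mod L = Suc n' mod L" by simp
        then have "bv i = bv (Suc n')" by (rule bv_modeq)
        then have "w = av n'" using ws vb sg_bv by simp
        then show ?thesis using av_in modin by blast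
      qed
    qed
  qed
  have a0C: "a0 \<in> ?C"
  proof -
    have "av 0 = a0" unfolding av_def by simp
    then have "a0 \<in> uo (av 0)" using av_in[of 0] by simp
    then show ?thesis using L0 by blast
  qed
  show ?thesis
  proof
    fix v assume v: "v \<in> V"
    have "E\<^sup>*\<^sup>* a0 v" using conn v end_facts(11)[OF a0_end] unfolding graph_connected_def by blast
    then show "v \<in> ?C"
    proof (induction rule: rtranclp_induct)
      case base then show ?case using a0C .
    next
      case (step b c) then show ?case using cl by blast
    qed
  qed
qed

lemma L2: "2 \<le> L"
proof (rule ccontr)
  assume "\<not> 2 \<le> L"
  then have "L = 1" using L0 by simp
  then have "av 1 = a0" using L_prop(2) by simp
  then have "ta (sg a0) = a0" unfolding av_def ff_def by simp
  then have "ta (ta (sg a0)) = ta a0" by simp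
  then have "sg a0 = ta a0" using ta_ta sg_facts(1) a0_end by metis
  then show False using end_facts(2)[OF a0_end] end_facts(3)[OF a0_end] by simp
qed

lemma shape_i: "\<exists>c d. uo (av i) = {av i, bv i, c, d} \<and> dia E (av i) (bv i) c d"
  using end_shape[OF av_end] unfolding bv_def by blast

definition cdv :: "nat \<Rightarrow> 'a \<times> 'a" where
  "cdv i = (SOME cd. uo (av i) = {av i, bv i, fst cd, snd cd} \<and> dia E (av i) (bv i) (fst cd) (snd cd))"

lemma cdv_prop: "uo (av i) = {av i, bv i, fst (cdv i), snd (cdv i)} \<and> dia E (av i) (bv i) (fst (cdv i)) (snd (cdv i))"
proof -
  obtain c d where "uo (av i) = {av i, bv i, c, d} \<and> dia E (av i) (bv i) c d" using shape_i by blast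
  then have "uo (av i) = {av i, bv i, fst (c,d), snd (c,d)} \<and> dia E (av i) (bv i) (fst (c,d)) (snd (c,d))" by simp
  then show ?thesis unfolding cdv_def by (rule someI)
qed

definition phi :: "nat \<times> nat \<Rightarrow> 'a" where
  "phi p = (if snd p = 0 then av (fst p) else if snd p = 1 then bv (fst p)
     else if snd p = 2 then fst (cdv (fst p)) else snd (cdv (fst p)))"

lemma phi_in: "phi (i,j) \<in> uo (av i)" using cdv_prop[of i] unfolding phi_def by auto

lemma phi_same: assumes j: "j < 4" "j' < 4"
  shows "E (phi (i,j)) (phi (i,j')) \<longleftrightarrow> (j \<noteq> j' \<and> {j,j'} \<noteq> {0,1})"
    and "phi (i,j) = phi (i,j') \<longleftrightarrow> j = j'"
proof -
  define c where "c = fst (cdv i)"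
  define d where "d = snd (cdv i)"
  have D: "dia E (av i) (bv i) c d" using cdv_prop unfolding c_def d_def by blast
  have p: "phi (i,0) = av i" "phi (i,1) = bv i" "phi (i,2) = c" "phi (i,3) = d"
    unfolding phi_def c_def d_def by auto
  have dd: "av i \<noteq> bv i" "av i \<noteq> c" "av i \<noteq> d" "bv i \<noteq> c" "bv i \<noteq> d" "c \<noteq> d"
     "\<not> E (av i) (bv i)" "E (av i) c" "E (av i) d" "E (bv i) c" "E (bv i) d" "E c d"
    using D unfolding dia_def by auto
  have ds: "bv i \<noteq> av i" "c \<noteq> av i" "d \<noteq> av i" "c \<noteq> bv i" "d \<noteq> bv i" "d \<noteq> c"
     "\<not> E (bv i) (av i)" "E c (av i)" "E d (av i)" "E c (bv i)" "E d (bv i)" "E d c"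
    using dd Esym by metis+
  have ir: "\<not> E x x" for x by simp
  have jj: "j = 0 \<or> j = 1 \<or> j = 2 \<or> j = 3" "j' = 0 \<or> j' = 1 \<or> j' = 2 \<or> j' = 3" using j by auto
  show "E (phi (i,j)) (phi (i,j')) \<longleftrightarrow> (j \<noteq> j' \<and> {j,j'} \<noteq> {0,1})"
    using jj(1) jj(2) by (elim disjE) (simp_all only: p dd ds ir, simp_all add: doubleton_eq_iff)
  show "phi (i,j) = phi (i,j') \<longleftrightarrow> j = j'"
    using jj(1) jj(2) by (elim disjE) (simp_all only: p dd ds, simp_all)
qed

end



lemma neck_same: assumes "i < k" "2 \<le> k" "j < 4" "j' < 4"
  shows "necklace_E k (i,j) (i,j') \<longleftrightarrow> (j \<noteq> j' \<and> {j,j'} \<noteq> {0,1})"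
proof -
  have ne: "(i + 1) mod k \<noteq> i" using mod_suc_ne assms(1,2) by blast
  have m: "(i,j) \<in> necklace_V k" "(i,j') \<in> necklace_V k" using assms unfolding necklace_V_def by auto
  show ?thesis unfolding necklace_E_def using m ne by auto
qed

lemma neck_diff: assumes "i < k" "i' < k" "j < 4" "j' < 4" "i \<noteq> i'"
  shows "necklace_E k (i,j) (i',j') \<longleftrightarrow>
    ((j = 0 \<and> j' = 1 \<and> i' = (i + 1) mod k) \<or> (j' = 0 \<and> j = 1 \<and> i = (i' + 1) mod k))"
proof -
  have m: "(i,j) \<in> necklace_V k" "(i',j') \<in> necklace_V k" using assms unfolding necklace_V_def by auto
  show ?thesis unfolding necklace_E_def using m assms(5) by auto
qed

context cgd begin

lemma phi_V: "phi (i,j) \<in> V" using phi_in P0_sub uo_av_P0 by blast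

lemma phi_not_end: "j < 4 \<Longrightarrow> isend (phi (i,j)) \<Longrightarrow> j = 0 \<or> j = 1"
proof -
  assume j: "j < 4" and e: "isend (phi (i,j))"
  have "phi (i,j) = av i \<or> phi (i,j) = bv i"
    using end_facts(8)[OF av_end phi_in e] unfolding bv_def by blast
  moreover have "phi (i,0) = av i" "phi (i,1) = bv i" unfolding phi_def by auto
  ultimately have "phi (i,j) = phi (i,0) \<or> phi (i,j) = phi (i,1)" by simp
  then show ?thesis using phi_same(2)[of j 0 i] phi_same(2)[of j 1 i] j by auto
qed

lemma phi_diff_imp:
  assumes ij: "i < L" "i' < L" "j < 4" "j' < 4" "i \<noteq> i'" and e: "E (phi (i,j)) (phi (i',j'))"
  shows "(j = 0 \<and> j' = 1 \<and> i' = (i + 1) mod L) \<or> (j' = 0 \<and> j = 1 \<and> i = (i' + 1) mod L)"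
proof -
  let ?x = "phi (i,j)" and ?y = "phi (i',j')"
  have yn: "?y \<notin> uo (av i)" using meet_idx[OF ij(1,2) _ phi_in] ij(5) by blast
  have xn: "?x \<notin> uo (av i')" using meet_idx[OF ij(2,1) _ phi_in] ij(5) by blast
  have ux: "uo ?x = uo (av i)" using uo_eq[OF uo_av_P0 phi_in] .
  have uy: "uo ?y = uo (av i')" using uo_eq[OF uo_av_P0 phi_in] .
  have xe: "isend ?x" unfolding isend_def using phi_V e yn ux by auto
  have ye: "isend ?y" unfolding isend_def using phi_V Esym[OF e] xn uy by auto
  have ys: "?y = sg ?x" using end_facts(9)[OF xe e] yn ux by simp
  have j01: "j = 0 \<or> j = 1" using phi_not_end[OF ij(3) xe] .
  have j01': "j' = 0 \<or> j' = 1" using phi_not_end[OF ij(4) ye] .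
  have p0: "phi (a,0) = av a" and p1: "phi (a,1) = bv a" for a unfolding phi_def by auto
  from j01 show ?thesis
  proof
    assume j0: "j = 0"
    then have y1: "?y = bv (Suc i)" using ys p0 bv_Suc by simp
    have "Suc i mod L < L" using L0 by simp
    moreover have "?y \<in> uo (av (Suc i mod L))" using y1 bv_in uo_av_mod by metis
    ultimately have ii: "i' = Suc i mod L" using meet_idx[OF ij(2) _ phi_in] by blast
    have "j' = 1"
    proof (rule ccontr)
      assume "j' \<noteq> 1"
      then have "j' = 0" using j01' by blast
      then have "?y = av i'" using p0 by simp
      also have "\<dots> = av (Suc i)" using ii av_modeq[of i' "Suc i"] by simp
      finally have "av (Suc i) = bv (Suc i)" using y1 by simp
      then show False using end_facts(4)[OF av_end] unfolding bv_def by metis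
    qed
    then show ?thesis using j0 ii by simp
  next
    assume j1: "j = 1"
    define n' where "n' = i + L - 1"
    have sn: "Suc n' = i + L" unfolding n'_def using L0 by simp
    then have "i mod L = Suc n' mod L" by simp
    then have "bv i = bv (Suc n')" by (rule bv_modeq)
    then have y1: "?y = av n'" using ys p1 j1 sg_bv by simp
    have "n' mod L < L" using L0 by simp
    moreover have "?y \<in> uo (av (n' mod L))" using y1 av_in uo_av_mod by metis
    ultimately have ii: "i' = n' mod L" using meet_idx[OF ij(2) _ phi_in] by blast
    have "j' = 0"
    proof (rule ccontr)
      assume "j' \<noteq> 0"
      then have "j' = 1" using j01' by blast
      then have "?y = bv i'" using p1 by simp
      also have "\<dots> = bv n'" using ii bv_modeq[of i' n'] by simp
      finally have "av n' = bv n'" using y1 by simp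
      then show False using end_facts(4)[OF av_end] unfolding bv_def by metis
    qed
    moreover have "i = (i' + 1) mod L"
    proof -
      have "(i' + 1) mod L = Suc (n' mod L) mod L" using ii by simp
      also have "\<dots> = Suc n' mod L" by (simp add: mod_Suc_eq)
      also have "\<dots> = i" using sn ij(1) by simp
      finally show ?thesis by simp
    qed
    ultimately show ?thesis using j1 by simp
  qed
qed

lemma phi_diff_rev:
  assumes ij: "i < L" "i' < L"
    and c: "(j = 0 \<and> j' = 1 \<and> i' = (i + 1) mod L) \<or> (j' = 0 \<and> j = 1 \<and> i = (i' + 1) mod L)"
  shows "E (phi (i,j)) (phi (i',j'))"
proof -
  have p0: "phi (a,0) = av a" and p1: "phi (a,1) = bv a" for a unfolding phi_def by auto
  from c show ?thesis
  proof
    assume h: "j = 0 \<and> j' = 1 \<and> i' = (i + 1) mod L"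
    have "bv i' = bv (Suc i)" using h bv_modeq[of i' "Suc i"] ij by simp
    then have "phi (i',j') = sg (av i)" using h p1 bv_Suc by simp
    then show ?thesis using h p0 end_facts(1)[OF av_end] by simp
  next
    assume h: "j' = 0 \<and> j = 1 \<and> i = (i' + 1) mod L"
    have "bv i = bv (Suc i')" using h bv_modeq[of i "Suc i'"] ij by simp
    then have "phi (i,j) = sg (av i')" using h p1 bv_Suc by simp
    then show ?thesis using h p0 Esym[OF end_facts(1)[OF av_end]] by simp
  qed
qed

lemma phi_edge: assumes "p \<in> necklace_V L" "q \<in> necklace_V L"
  shows "E (phi p) (phi q) \<longleftrightarrow> necklace_E L p q"
proof -
  obtain i j i' j' where pq: "p = (i,j)" "q = (i',j')" "i < L" "j < 4" "i' < L" "j' < 4"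
    using assms unfolding necklace_V_def by blast
  show ?thesis
  proof (cases "i = i'")
    case True
    then show ?thesis using phi_same(1)[OF pq(4,6)] neck_same[OF pq(3) L2 pq(4,6)] pq by simp
  next
    case False
    have "E (phi p) (phi q) \<longleftrightarrow> ((j = 0 \<and> j' = 1 \<and> i' = (i + 1) mod L) \<or> (j' = 0 \<and> j = 1 \<and> i = (i' + 1) mod L))"
      using phi_diff_imp[OF pq(3,5,4,6) False] phi_diff_rev[OF pq(3,5)] pq by blast
    then show ?thesis using neck_diff[OF pq(3,5,4,6) False] pq by simp
  qed
qed

lemma phi_bij: "bij_betw phi (necklace_V L) V"
proof (rule bij_betw_imageI)
  show "inj_on phi (necklace_V L)"
  proof (rule inj_onI)
    fix p q assume p: "p \<in> necklace_V L" and q: "q \<in> necklace_V L" and e: "phi p = phi q"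
    obtain i j i' j' where pq: "p = (i,j)" "q = (i',j')" "i < L" "j < 4" "i' < L" "j' < 4"
      using p q unfolding necklace_V_def by blast
    have "phi (i,j) \<in> uo (av i')" using e pq phi_in by metis
    then have "i = i'" using meet_idx[OF pq(3,5) phi_in] by blast
    then have "phi (i,j) = phi (i,j')" using e pq by simp
    then have "j = j'" using phi_same(2)[OF pq(4,6)] by blast
    then show "p = q" using pq \<open>i = i'\<close> by simp
  qed
  show "phi ` necklace_V L = V"
  proof
    show "phi ` necklace_V L \<subseteq> V" using phi_V by auto
    show "V \<subseteq> phi ` necklace_V L"
    proof
      fix v assume "v \<in> V"
      then obtain i where i: "i < L" "v \<in> uo (av i)" using coverage by blast
      have "uo (av i) = {phi (i,0), phi (i,1), phi (i,2), phi (i,3)}"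
        using cdv_prop[of i] unfolding phi_def by simp
      then have "v = phi (i,0) \<or> v = phi (i,1) \<or> v = phi (i,2) \<or> v = phi (i,3)" using i(2) by blast
      moreover have mem: "phi (i,j) \<in> phi ` necklace_V L" if "j < 4" for j
        using i(1) that unfolding necklace_V_def by (intro imageI) simp
      ultimately show "v \<in> phi ` necklace_V L" using mem[of 0] mem[of 1] mem[of 2] mem[of 3] by auto
    qed
  qed
qed

lemma is_necklace: "is_diamond_necklace V E"
  unfolding is_diamond_necklace_def
proof (intro exI conjI)
  show "2 \<le> L" by (rule L2)
  define f where "f = inv_into (necklace_V L) phi"
  have bf: "bij_betw f V (necklace_V L)" unfolding f_def using phi_bij by (rule bij_betw_inv_into)
  have pf: "phi (f x) = x" if "x \<in> V" for x
    unfolding f_def using phi_bij that by (simp add: bij_betw_inv_into_right)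
  have fN: "f x \<in> necklace_V L" if "x \<in> V" for x using bf that bij_betwE by blast
  show "graph_iso V E (necklace_V L) (necklace_E L)"
    unfolding graph_iso_def
  proof (intro exI conjI ballI)
    show "bij_betw f V (necklace_V L)" using bf .
    fix x y assume x: "x \<in> V" and y: "y \<in> V"
    have "E x y \<longleftrightarrow> E (phi (f x)) (phi (f y))" using pf x y by simp
    also have "\<dots> \<longleftrightarrow> necklace_E L (f x) (f y)" using phi_edge fN x y by blast
    finally show "E x y \<longleftrightarrow> necklace_E L (f x) (f y)" .
  qed
qed

end


context cg begin

lemma m_perc_eq:
  assumes lo: "\<And>S. percolating V E 2 S \<Longrightarrow> b \<le> card S"
    and up: "\<exists>S. percolating V E 2 S \<and> card S \<le> b"
  shows "m_perc V E 2 = b"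
proof -
  obtain S0 where S0: "percolating V E 2 S0" "card S0 \<le> b" using up by blast
  then have c0: "card S0 = b" using lo by (simp add: le_antisym)
  have ex: "\<exists>c. \<exists>S. percolating V E 2 S \<and> card S = c" using S0 by blast
  have "m_perc V E 2 \<le> b" unfolding m_perc_def by (rule Least_le) (use S0 c0 in blast)
  moreover have "\<exists>S. percolating V E 2 S \<and> card S = m_perc V E 2"
    unfolding m_perc_def by (rule LeastI_ex) (use S0 in blast)
  then have "b \<le> m_perc V E 2" using lo by metis
  ultimately show ?thesis by simp
qed

lemma main: "m_perc V E 2 = (if is_diamond_necklace V E then num_units V E + 1 else num_units V E)"
proof (cases "V = {}")
  case True
  have "P0 = {}" using P0_sub P0_ne True by blast
  then have nu: "num_units V E = 0" using num_units_P0 by simp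
  have nn: "\<not> is_diamond_necklace V E" using neck_all_dia True by blast
  have "percolating V E 2 {}" unfolding percolating_def using True by simp
  then have "m_perc V E 2 = 0" using m_perc_eq[of 0] by fastforce
  then show ?thesis using nu nn by simp
next
  case Vne: False
  show ?thesis
  proof (cases "\<exists>U\<in>P0. istri U")
    case True
    then obtain U where U: "U \<in> P0" "istri U" by blast
    have nn: "\<not> is_diamond_necklace V E"
    proof
      assume "is_diamond_necklace V E"
      then have "isdia U" using neck_all_dia U(1) by blast
      then show False using isdia_not_tri U(2) by blast
    qed
    obtain U' p q where tr: "trout U' p q" and bk: "(rem p q)\<^sup>*\<^sup>* q p" using good_edge True by blast
    have t: "U' \<in> P0" "istri U'" "p \<in> U'" "E p q" "q \<notin> U'" using tr unfolding trout_def by auto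
    have "m_perc V E 2 = card P0"
      using m_perc_eq[of "card P0"] units_le_perc ub_tri[OF t(1,2,3,4,5) bk] by blast
    then show ?thesis using nn num_units_P0 by simp
  next
    case False
    then have alld: "\<forall>X\<in>P0. isdia X" using P0_cases by blast
    have "cgd V E" unfolding cgd_def cgd_axioms_def using cg_axioms alld Vne by blast
    then have nk: "is_diamond_necklace V E" by (rule cgd.is_necklace)
    have "m_perc V E 2 = card P0 + 1"
      using m_perc_eq[of "card P0 + 1"] lb_dia[OF alld Vne] ub_dia[OF alld Vne] by blast
    then show ?thesis using nk num_units_P0 by simp
  qed
qed

end

theorem theorem4p4:
  fixes V :: "'a set" and E :: "'a \<Rightarrow> 'a \<Rightarrow> bool"
  assumes "simple_graph V E" and "graph_connected V E" and "claw_free V E"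
    and "cubic V E" and "\<not> is_K4 V E"
  shows "m_perc V E 2 = (if is_diamond_necklace V E then num_units V E + 1 else num_units V E)"
proof -
  have "cg V E" unfolding cg_def using assms by blast
  then show ?thesis by (rule cg.main)
qed



end
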